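(* For every $n\ge 2$, the number of $n\times n$ permutation matrices $P$ that are the leaf matrix of exactly one CNM of size $n$ is $2^{n-2}$.
   Context: A complete non-ambiguous matrix (CNM) of size $n$ is an $n\times n$ matrix $M=(m_{i,j})$ with entries in $\{0,1\}$ whose support $T=\{(i,j): m_{i,j}=1\}$ (whose elements are called vertices) satisfies: (1) $(1,1)\in T$; (2) for every $p=(i,j)\in T$ with $p\neq(1,1)$, exactly one of the following holds: there is $(i',j)\in T$ with $i'<i$, or there is $(i,j')\in T$ with $j'<j$; (3) every row and every column of $M$ contains at least one vertex; (4) define the parent of $p=(i,j)\neq(1,1)$ to be $(i',j)$ with $i'<i$ maximal if such a vertex exists, and otherwise $(i,j')$ with $j'<j$ maximal; then every vertex is the parent of either zero or exactly two vertices. A vertex with no children is a leaf. The leaf matrix $p(M)$ is obtained from $M$ by replacing all non-leaf vertices by $0$ (it is a permutation matrix). *)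

theory Defs
  imports Main
begin

(* An n x n 0/1 matrix is represented by its support T, a set of positions (i,j)
   with 1 <= i,j <= n (rows/columns indexed from 1). *)

definition cnm_parent :: "(nat \<times> nat) set \<Rightarrow> nat \<times> nat \<Rightarrow> nat \<times> nat" where
  "cnm_parent T p = (case p of (i, j) \<Rightarrow>
     if (\<exists>i'. i' < i \<and> (i', j) \<in> T)
     then (GREATEST i'. i' < i \<and> (i', j) \<in> T, j)
     else (i, GREATEST j'. j' < j \<and> (i, j') \<in> T))"

definition cnm_children :: "(nat \<times> nat) set \<Rightarrow> nat \<times> nat \<Rightarrow> (nat \<times> nat) set" where
  "cnm_children T v = {p \<in> T. p \<noteq> (1, 1) \<and> cnm_parent T p = v}"

definition is_cnm :: "nat \<Rightarrow> (nat \<times> nat) set \<Rightarrow> bool" where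
  "is_cnm n T \<longleftrightarrow>
     T \<subseteq> {1..n} \<times> {1..n} \<and>
     (1, 1) \<in> T \<and>
     (\<forall>(i, j) \<in> T. (i, j) \<noteq> (1, 1) \<longrightarrow>
        ((\<exists>i'. i' < i \<and> (i', j) \<in> T) \<noteq> (\<exists>j'. j' < j \<and> (i, j') \<in> T))) \<and>
     (\<forall>i \<in> {1..n}. \<exists>j. (i, j) \<in> T) \<and>
     (\<forall>j \<in> {1..n}. \<exists>i. (i, j) \<in> T) \<and>
     (\<forall>v \<in> T. card (cnm_children T v) = 0 \<or> card (cnm_children T v) = 2)"

definition leaf_matrix :: "(nat \<times> nat) set \<Rightarrow> (nat \<times> nat) set" where
  "leaf_matrix T = {v \<in> T. cnm_children T v = {}}"

definition is_perm_matrix :: "nat \<Rightarrow> (nat \<times> nat) set \<Rightarrow> bool" where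
  "is_perm_matrix n P \<longleftrightarrow>
     P \<subseteq> {1..n} \<times> {1..n} \<and>
     (\<forall>i \<in> {1..n}. \<exists>!j. (i, j) \<in> P) \<and>
     (\<forall>j \<in> {1..n}. \<exists>!i. (i, j) \<in> P)"

end

theory Submission
  imports Defs
begin

definition abv :: "(nat \<times> nat) set \<Rightarrow> nat \<Rightarrow> nat \<Rightarrow> bool" where
  "abv T i j \<longleftrightarrow> (\<exists>i'. i' < i \<and> (i', j) \<in> T)"
definition lft :: "(nat \<times> nat) set \<Rightarrow> nat \<Rightarrow> nat \<Rightarrow> bool" where
  "lft T i j \<longleftrightarrow> (\<exists>j'. j' < j \<and> (i, j') \<in> T)"
definition below :: "(nat \<times> nat) set \<Rightarrow> nat \<Rightarrow> nat \<Rightarrow> bool" where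
  "below T i j \<longleftrightarrow> (\<exists>i'. i < i' \<and> (i', j) \<in> T)"
definition rgt :: "(nat \<times> nat) set \<Rightarrow> nat \<Rightarrow> nat \<Rightarrow> bool" where
  "rgt T i j \<longleftrightarrow> (\<exists>j'. j < j' \<and> (i, j') \<in> T)"

definition cnm2 :: "nat \<Rightarrow> (nat \<times> nat) set \<Rightarrow> bool" where
  "cnm2 n T \<longleftrightarrow> T \<subseteq> {1..n} \<times> {1..n} \<and> (1,1) \<in> T \<and>
     (\<forall>i j. (i,j) \<in> T \<longrightarrow> (i,j) \<noteq> (1,1) \<longrightarrow> abv T i j \<noteq> lft T i j) \<and>
     (\<forall>i\<in>{1..n}. \<exists>j. (i,j) \<in> T) \<and> (\<forall>j\<in>{1..n}. \<exists>i. (i,j) \<in> T) \<and>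
     (\<forall>i j. (i,j) \<in> T \<longrightarrow> (below T i j \<longleftrightarrow> rgt T i j))"

definition lv :: "(nat \<times> nat) set \<Rightarrow> (nat \<times> nat) set" where
  "lv T = {(i,j). (i,j) \<in> T \<and> \<not> below T i j}"

lemma greatest_eq_iff:
  assumes "\<exists>k. k < (a::nat) \<and> Q k"
  shows "(GREATEST k. k < a \<and> Q k) = i \<longleftrightarrow> (i < a \<and> Q i \<and> (\<forall>k. i < k \<and> k < a \<longrightarrow> \<not> Q k))"
proof
  let ?G = "GREATEST k. k < a \<and> Q k"
  have bd: "\<forall>y. y < a \<and> Q y \<longrightarrow> y \<le> a" by auto
  have G: "?G < a \<and> Q ?G" using GreatestI_nat[of "\<lambda>k. k < a \<and> Q k"] assms bd
    by (metis (no_types, lifting))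
  have le: "\<And>y. y < a \<and> Q y \<Longrightarrow> y \<le> ?G" using Greatest_le_nat[of "\<lambda>k. k < a \<and> Q k"] bd by blast
  show "?G = i \<Longrightarrow> i < a \<and> Q i \<and> (\<forall>k. i < k \<and> k < a \<longrightarrow> \<not> Q k)"
    using G le by (metis not_le)
  show "i < a \<and> Q i \<and> (\<forall>k. i < k \<and> k < a \<longrightarrow> \<not> Q k) \<Longrightarrow> ?G = i"
    using G le by (metis antisym_conv2 le_antisym not_le)
qed

lemma parent_eq:
  assumes c2: "\<forall>i j. (i,j)\<in>T \<longrightarrow> (i,j)\<noteq>(1,1) \<longrightarrow> abv T i j \<noteq> lft T i j"
    and p: "(a,b) \<in> T" "(a,b) \<noteq> (1,1)"
  shows "cnm_parent T (a,b) = (i,j) \<longleftrightarrow>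
    ((b = j \<and> i < a \<and> (i,j) \<in> T \<and> (\<forall>k. i<k \<and> k<a \<longrightarrow> (k,j) \<notin> T)) \<or>
     (a = i \<and> j < b \<and> (i,j) \<in> T \<and> \<not> abv T a b \<and> (\<forall>k. j<k \<and> k<b \<longrightarrow> (i,k) \<notin> T)))"
proof (cases "abv T a b")
  case True
  then have ex: "\<exists>k. k < a \<and> (k,b) \<in> T" unfolding abv_def by auto
  have "cnm_parent T (a,b) = (GREATEST k. k < a \<and> (k,b) \<in> T, b)"
    unfolding cnm_parent_def using ex by auto
  then show ?thesis using greatest_eq_iff[OF ex, of i] True by auto
next
  case False
  then have "lft T a b" using c2 p by auto
  then have ex: "\<exists>k. k < b \<and> (a,k) \<in> T" unfolding lft_def by auto
  have "cnm_parent T (a,b) = (a, GREATEST k. k < b \<and> (a,k) \<in> T)"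
    unfolding cnm_parent_def using False unfolding abv_def by auto
  then show ?thesis using greatest_eq_iff[OF ex, of j] False unfolding abv_def by auto
qed

lemma children_eq:
  assumes c2: "\<forall>i j. (i,j)\<in>T \<longrightarrow> (i,j)\<noteq>(1,1) \<longrightarrow> abv T i j \<noteq> lft T i j"
    and pos: "\<forall>x y. (x,y) \<in> T \<longrightarrow> 1 \<le> x \<and> 1 \<le> y"
    and v: "(i,j) \<in> T"
  shows "cnm_children T (i,j) =
     {(a,j) | a. (a,j)\<in>T \<and> i<a \<and> (\<forall>k. i<k \<and> k<a \<longrightarrow> (k,j)\<notin>T)} \<union>
     {(i,b) | b. (i,b)\<in>T \<and> j<b \<and> (\<forall>k. j<k \<and> k<b \<longrightarrow> (i,k)\<notin>T)}" (is "?L = ?A \<union> ?B")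
proof
  show "?L \<subseteq> ?A \<union> ?B"
  proof
    fix p assume "p \<in> ?L"
    then obtain a b where pe: "p = (a,b)" "(a,b) \<in> T" "(a,b) \<noteq> (1,1)" "cnm_parent T (a,b) = (i,j)"
      unfolding cnm_children_def by (cases p) auto
    then show "p \<in> ?A \<union> ?B" using parent_eq[OF c2 pe(2,3), of i j] by auto
  qed
next
  show "?A \<union> ?B \<subseteq> ?L"
  proof
    fix p assume "p \<in> ?A \<union> ?B"
    then show "p \<in> ?L"
    proof
      assume "p \<in> ?A"
      then obtain a where a: "p = (a,j)" "(a,j)\<in>T" "i<a" "\<forall>k. i<k \<and> k<a \<longrightarrow> (k,j)\<notin>T" by auto
      have "i \<ge> 1" using pos v by auto
      then have ne: "(a,j) \<noteq> (1,1)" using a by auto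
      show ?thesis using parent_eq[OF c2 a(2) ne, of i j] a v ne unfolding cnm_children_def by auto
    next
      assume "p \<in> ?B"
      then obtain b where b: "p = (i,b)" "(i,b)\<in>T" "j<b" "\<forall>k. j<k \<and> k<b \<longrightarrow> (i,k)\<notin>T" by auto
      have "j \<ge> 1" using pos v by auto
      then have ne: "(i,b) \<noteq> (1,1)" using b by auto
      have "lft T i b" unfolding lft_def using b v by auto
      then have na: "\<not> abv T i b" using c2 b(2) ne by auto
      show ?thesis using parent_eq[OF c2 b(2) ne, of i j] b v ne na unfolding cnm_children_def by auto
    qed
  qed
qed

lemma colset:
  "{(a,j) | a. (a,j)\<in>T \<and> i<a \<and> (\<forall>k. i<k \<and> k<a \<longrightarrow> (k,j)\<notin>T)} =
   (if below T i j then {(LEAST a. i < a \<and> (a,j) \<in> T, j)} else {})"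
proof (cases "below T i j")
  case True
  let ?a = "LEAST a. i < a \<and> (a,j) \<in> T"
  have ex: "\<exists>a. i < a \<and> (a,j) \<in> T" using True unfolding below_def by auto
  have A: "i < ?a \<and> (?a,j) \<in> T" using LeastI_ex[OF ex] .
  have B: "\<And>a. i < a \<and> (a,j) \<in> T \<Longrightarrow> ?a \<le> a" by (rule Least_le)
  show ?thesis using True A B
    by (auto, metis le_neq_implies_less, meson leD) 
next
  case False
  then show ?thesis unfolding below_def by auto
qed

lemma rowset:
  "{(i,b) | b. (i,b)\<in>T \<and> j<b \<and> (\<forall>k. j<k \<and> k<b \<longrightarrow> (i,k)\<notin>T)} =
   (if rgt T i j then {(i, LEAST b. j < b \<and> (i,b) \<in> T)} else {})"
proof (cases "rgt T i j")
  case True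
  let ?a = "LEAST b. j < b \<and> (i,b) \<in> T"
  have ex: "\<exists>b. j < b \<and> (i,b) \<in> T" using True unfolding rgt_def by auto
  have A: "j < ?a \<and> (i,?a) \<in> T" using LeastI_ex[OF ex] .
  have B: "\<And>b. j < b \<and> (i,b) \<in> T \<Longrightarrow> ?a \<le> b" by (rule Least_le)
  show ?thesis using True A B
    by (auto, metis le_neq_implies_less, meson leD) 
next
  case False
  then show ?thesis unfolding rgt_def by auto
qed

lemma card_children:
  assumes c2: "\<forall>i j. (i,j)\<in>T \<longrightarrow> (i,j)\<noteq>(1,1) \<longrightarrow> abv T i j \<noteq> lft T i j"
    and pos: "\<forall>x y. (x,y) \<in> T \<longrightarrow> 1 \<le> x \<and> 1 \<le> y"
    and v: "(i,j) \<in> T"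
  shows "card (cnm_children T (i,j)) = (if below T i j then 1 else 0) + (if rgt T i j then 1 else 0)"
    and "cnm_children T (i,j) = {} \<longleftrightarrow> \<not> below T i j \<and> \<not> rgt T i j"
proof -
  let ?a = "LEAST a. i < a \<and> (a,j) \<in> T"
  let ?b = "LEAST b. j < b \<and> (i,b) \<in> T"
  have neq: "rgt T i j \<Longrightarrow> (?a, j) \<noteq> (i, ?b)"
    using LeastI_ex[of "\<lambda>b. j < b \<and> (i,b) \<in> T"] unfolding rgt_def by auto
  have E: "cnm_children T (i,j) = (if below T i j then {(?a, j)} else {}) \<union> (if rgt T i j then {(i, ?b)} else {})"
    using children_eq[OF c2 pos v] colset[where T=T and i=i and j=j] rowset[where T=T and i=i and j=j] by simp
  show "card (cnm_children T (i,j)) = (if below T i j then 1 else 0) + (if rgt T i j then 1 else 0)"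
  proof (cases "below T i j")
    case True
    show ?thesis
    proof (cases "rgt T i j")
      case True2: True
      have "cnm_children T (i,j) = {(?a, j), (i, ?b)}" unfolding E using True True2 by auto
      then show ?thesis using True True2 neq by simp
    next
      case False
      have "cnm_children T (i,j) = {(?a, j)}" unfolding E using True False by simp
      then show ?thesis using True False by simp
    qed
  next
    case False
    show ?thesis
    proof (cases "rgt T i j")
      case True2: True
      have "cnm_children T (i,j) = {(i, ?b)}" unfolding E using False True2 by simp
      then show ?thesis using False True2 by simp
    next
      case False2: False
      have "cnm_children T (i,j) = {}" unfolding E using False False2 by simp
      then show ?thesis using False False2 by simp
    qed
  qed
  show "cnm_children T (i,j) = {} \<longleftrightarrow> \<not> below T i j \<and> \<not> rgt T i j"
    unfolding E by simp
qed

lemma cnm_iff: "is_cnm n T \<longleftrightarrow> cnm2 n T"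
proof -
  have c2eq: "(\<forall>(i, j) \<in> T. (i, j) \<noteq> (1, 1) \<longrightarrow>
        ((\<exists>i'. i' < i \<and> (i', j) \<in> T) \<noteq> (\<exists>j'. j' < j \<and> (i, j') \<in> T))) \<longleftrightarrow>
     (\<forall>i j. (i,j) \<in> T \<longrightarrow> (i,j) \<noteq> (1,1) \<longrightarrow> abv T i j \<noteq> lft T i j)"
  proof -
    have gen: "\<And>Q. (\<forall>(i,j)\<in>T. Q i j) \<longleftrightarrow> (\<forall>i j. (i,j)\<in>T \<longrightarrow> Q i j)" by auto
    show ?thesis using gen[of "\<lambda>i j. (i,j)\<noteq>(1,1) \<longrightarrow> abv T i j \<noteq> lft T i j"]
      unfolding abv_def lft_def by simp
  qed
  have key: "(\<forall>v \<in> T. card (cnm_children T v) = 0 \<or> card (cnm_children T v) = 2) \<longleftrightarrow>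
        (\<forall>i j. (i,j) \<in> T \<longrightarrow> (below T i j \<longleftrightarrow> rgt T i j))"
    if c2: "\<forall>i j. (i,j)\<in>T \<longrightarrow> (i,j)\<noteq>(1,1) \<longrightarrow> abv T i j \<noteq> lft T i j"
      and pos: "\<forall>x y. (x,y) \<in> T \<longrightarrow> 1 \<le> x \<and> 1 \<le> y"
  proof -
    have "\<And>i j. (i,j) \<in> T \<Longrightarrow> (card (cnm_children T (i,j)) = 0 \<or> card (cnm_children T (i,j)) = 2) \<longleftrightarrow>
         (below T i j \<longleftrightarrow> rgt T i j)"
      using card_children(1)[OF c2 pos] by auto
    then show ?thesis by auto
  qed
  show ?thesis
  proof
    assume H: "is_cnm n T"
    then have c2: "\<forall>i j. (i,j)\<in>T \<longrightarrow> (i,j)\<noteq>(1,1) \<longrightarrow> abv T i j \<noteq> lft T i j"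
      unfolding is_cnm_def using c2eq by simp
    have pos: "\<forall>x y. (x,y) \<in> T \<longrightarrow> 1 \<le> x \<and> 1 \<le> y" using H unfolding is_cnm_def by auto
    have k: "\<forall>i j. (i,j) \<in> T \<longrightarrow> (below T i j \<longleftrightarrow> rgt T i j)"
      using H key[OF c2 pos] unfolding is_cnm_def by simp
    show "cnm2 n T" unfolding cnm2_def using H c2 k unfolding is_cnm_def by simp
  next
    assume H: "cnm2 n T"
    then have c2: "\<forall>i j. (i,j)\<in>T \<longrightarrow> (i,j)\<noteq>(1,1) \<longrightarrow> abv T i j \<noteq> lft T i j"
      unfolding cnm2_def by simp
    have pos: "\<forall>x y. (x,y) \<in> T \<longrightarrow> 1 \<le> x \<and> 1 \<le> y" using H unfolding cnm2_def by auto
    have k: "\<forall>v \<in> T. card (cnm_children T v) = 0 \<or> card (cnm_children T v) = 2"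
      using H key[OF c2 pos] unfolding cnm2_def by simp
    show "is_cnm n T" unfolding is_cnm_def using H c2eq k unfolding cnm2_def by simp
  qed
qed

lemma leaf_eq:
  assumes "cnm2 n T" shows "leaf_matrix T = lv T"
proof -
  have c2: "\<forall>i j. (i,j)\<in>T \<longrightarrow> (i,j)\<noteq>(1,1) \<longrightarrow> abv T i j \<noteq> lft T i j"
    using assms unfolding cnm2_def by blast
  have pos: "\<forall>x y. (x,y) \<in> T \<longrightarrow> 1 \<le> x \<and> 1 \<le> y" using assms unfolding cnm2_def by auto
  have br: "\<forall>i j. (i,j) \<in> T \<longrightarrow> (below T i j \<longleftrightarrow> rgt T i j)" using assms unfolding cnm2_def by blast
  show ?thesis unfolding leaf_matrix_def lv_def
    using card_children(2)[OF c2 pos] br by auto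
qed

lemma abvI: "i' < i \<Longrightarrow> (i',j) \<in> T \<Longrightarrow> abv T i j" unfolding abv_def by blast
lemma lftI: "j' < j \<Longrightarrow> (i,j') \<in> T \<Longrightarrow> lft T i j" unfolding lft_def by blast
lemma belowI: "i < i' \<Longrightarrow> (i',j) \<in> T \<Longrightarrow> below T i j" unfolding below_def by blast
lemma rgtI: "j < j' \<Longrightarrow> (i,j') \<in> T \<Longrightarrow> rgt T i j" unfolding rgt_def by blast

lemma cnm2_sub: "cnm2 n T \<Longrightarrow> (i,j) \<in> T \<Longrightarrow> 1 \<le> i \<and> i \<le> n \<and> 1 \<le> j \<and> j \<le> n"
  unfolding cnm2_def by auto
lemma cnm2_root: "cnm2 n T \<Longrightarrow> (1,1) \<in> T"
  unfolding cnm2_def by auto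
lemma cnm2_c2: "cnm2 n T \<Longrightarrow> (i,j) \<in> T \<Longrightarrow> (i,j) \<noteq> (1,1) \<Longrightarrow> abv T i j \<noteq> lft T i j"
  unfolding cnm2_def by blast
lemma cnm2_row: "cnm2 n T \<Longrightarrow> 1 \<le> i \<Longrightarrow> i \<le> n \<Longrightarrow> \<exists>j. (i,j) \<in> T"
  unfolding cnm2_def by auto
lemma cnm2_col: "cnm2 n T \<Longrightarrow> 1 \<le> j \<Longrightarrow> j \<le> n \<Longrightarrow> \<exists>i. (i,j) \<in> T"
  unfolding cnm2_def by auto
lemma cnm2_br: "cnm2 n T \<Longrightarrow> (i,j) \<in> T \<Longrightarrow> below T i j \<longleftrightarrow> rgt T i j"
  unfolding cnm2_def by blast
lemma cnm2_fin: "cnm2 n T \<Longrightarrow> finite T"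
  unfolding cnm2_def using finite_subset by blast

lemma cnm2I:
  assumes "T \<subseteq> {1..n} \<times> {1..n}" "(1,1) \<in> T"
    "\<And>i j. (i,j) \<in> T \<Longrightarrow> (i,j) \<noteq> (1,1) \<Longrightarrow> abv T i j \<noteq> lft T i j"
    "\<And>i. 1 \<le> i \<Longrightarrow> i \<le> n \<Longrightarrow> \<exists>j. (i,j) \<in> T"
    "\<And>j. 1 \<le> j \<Longrightarrow> j \<le> n \<Longrightarrow> \<exists>i. (i,j) \<in> T"
    "\<And>i j. (i,j) \<in> T \<Longrightarrow> below T i j \<longleftrightarrow> rgt T i j"
  shows "cnm2 n T"
  unfolding cnm2_def using assms by auto

lemma lv_iff: "(i,j) \<in> lv T \<longleftrightarrow> (i,j) \<in> T \<and> \<not> below T i j"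
  unfolding lv_def by auto

definition tr :: "(nat \<times> nat) set \<Rightarrow> (nat \<times> nat) set" where
  "tr T = {(i,j). (j,i) \<in> T}"

lemma tr_mem[simp]: "(i,j) \<in> tr T \<longleftrightarrow> (j,i) \<in> T"
  unfolding tr_def by auto
lemma tr_tr[simp]: "tr (tr T) = T"
  unfolding tr_def by auto
lemma tr_inj: "tr A = tr B \<Longrightarrow> A = B"
  by (metis tr_tr)

lemma abv_tr: "abv (tr T) i j = lft T j i" unfolding abv_def lft_def by auto
lemma lft_tr: "lft (tr T) i j = abv T j i" unfolding abv_def lft_def by auto
lemma below_tr: "below (tr T) i j = rgt T j i" unfolding below_def rgt_def by auto
lemma rgt_tr: "rgt (tr T) i j = below T j i" unfolding below_def rgt_def by auto

lemma cnm2_tr_imp: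
  assumes H: "cnm2 n T" shows "cnm2 n (tr T)"
proof (rule cnm2I)
  show "tr T \<subseteq> {1..n} \<times> {1..n}" using cnm2_sub[OF H] by auto
  show "(1,1) \<in> tr T" using cnm2_root[OF H] by simp
  show "abv (tr T) i j \<noteq> lft (tr T) i j" if "(i,j) \<in> tr T" "(i,j) \<noteq> (1,1)" for i j
    using cnm2_c2[OF H, of j i] that unfolding abv_tr lft_tr by auto
  show "\<exists>j. (i,j) \<in> tr T" if "1 \<le> i" "i \<le> n" for i using cnm2_col[OF H that] by auto
  show "\<exists>i. (i,j) \<in> tr T" if "1 \<le> j" "j \<le> n" for j using cnm2_row[OF H that] by auto
  show "below (tr T) i j \<longleftrightarrow> rgt (tr T) i j" if "(i,j) \<in> tr T" for i j
    using cnm2_br[OF H, of j i] that unfolding below_tr rgt_tr by auto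
qed

lemma cnm2_tr: "cnm2 n (tr T) \<longleftrightarrow> cnm2 n T"
  using cnm2_tr_imp[of n T] cnm2_tr_imp[of n "tr T"] by auto

lemma lv_tr: assumes H: "cnm2 n T" shows "lv (tr T) = tr (lv T)"
proof -
  have "(i,j) \<in> lv (tr T) \<longleftrightarrow> (i,j) \<in> tr (lv T)" for i j
    using cnm2_br[OF H, of j i] unfolding lv_iff tr_mem below_tr by auto
  then show ?thesis by auto
qed

lemma perm_tr_imp: assumes "is_perm_matrix n P" shows "is_perm_matrix n (tr P)"
  unfolding is_perm_matrix_def
proof (intro conjI)
  show "tr P \<subseteq> {1..n} \<times> {1..n}" using assms unfolding is_perm_matrix_def by auto
  show "\<forall>i\<in>{1..n}. \<exists>!j. (i, j) \<in> tr P" using assms unfolding is_perm_matrix_def by simp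
  show "\<forall>j\<in>{1..n}. \<exists>!i. (i, j) \<in> tr P" using assms unfolding is_perm_matrix_def by simp
qed

lemma perm_tr: "is_perm_matrix n (tr P) \<longleftrightarrow> is_perm_matrix n P"
  using perm_tr_imp[of n P] perm_tr_imp[of n "tr P"] by auto

lemma root_below:
  assumes H: "cnm2 n T" and n: "2 \<le> n" shows "below T 1 1"
proof -
  obtain i0 where i0: "(i0,2) \<in> T" using cnm2_col[OF H, of 2] n by auto
  let ?r = "LEAST i. (i,2) \<in> T"
  have r: "(?r,2) \<in> T" using LeastI[of "\<lambda>i. (i,2) \<in> T", OF i0] .
  have na: "\<not> abv T ?r 2" unfolding abv_def using not_less_Least[of _ "\<lambda>i. (i,2) \<in> T"] by blast
  have ne: "(?r,2::nat) \<noteq> (1,1)" by simp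
  have "lft T ?r 2" using cnm2_c2[OF H r ne] na by simp
  then obtain j' where j': "j' < 2" "(?r,j') \<in> T" unfolding lft_def by auto
  have "j' = 1" using cnm2_sub[OF H j'(2)] j'(1) by auto
  then have r1: "(?r,1) \<in> T" using j' by simp
  have "?r \<ge> 1" using cnm2_sub[OF H r] by simp
  then show ?thesis
  proof (cases "?r = 1")
    case True
    then have "rgt T 1 1" using r unfolding rgt_def by (intro exI[of _ "2::nat"]) simp
    then show ?thesis using cnm2_br[OF H cnm2_root[OF H]] by simp
  next
    case False
    then show ?thesis using r1 \<open>?r \<ge> 1\<close> unfolding below_def by (intro exI[of _ ?r]) simp
  qed
qed

lemma root_not_leaf: "cnm2 n T \<Longrightarrow> 2 \<le> n \<Longrightarrow> (1,1) \<notin> lv T"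
  using root_below unfolding lv_iff by blast

lemma perm_lv:
  assumes H: "cnm2 n T" shows "is_perm_matrix n (lv T)"
  unfolding is_perm_matrix_def
proof (intro conjI ballI)
  have fin: "finite T" using cnm2_fin[OF H] .
  show "lv T \<subseteq> {1..n} \<times> {1..n}" using cnm2_sub[OF H] unfolding lv_def by auto
  show "\<exists>!j. (i,j) \<in> lv T" if hi: "i \<in> {1..n}" for i
  proof -
    obtain j0 where j0: "(i,j0) \<in> T" using cnm2_row[OF H, of i] hi by auto
    let ?S = "{j. (i,j) \<in> T}"
    have "?S \<subseteq> snd ` T" by force
    then have finS: "finite ?S" using fin finite_subset by blast
    let ?m = "Max ?S"
    have m: "(i,?m) \<in> T" using Max_in[OF finS] j0 by auto
    have "\<not> rgt T i ?m" unfolding rgt_def using Max_ge[OF finS] by (auto simp: not_less[symmetric])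
    then have "(i,?m) \<in> lv T" using cnm2_br[OF H m] m unfolding lv_iff by simp
    moreover have "j = ?m" if "(i,j) \<in> lv T" for j
    proof (rule ccontr)
      assume ne: "j \<noteq> ?m"
      have jT: "(i,j) \<in> T" and nb: "\<not> below T i j" using that unfolding lv_iff by auto
      have "j \<le> ?m" using Max_ge[OF finS] jT by auto
      then have "j < ?m" using ne by simp
      then have "rgt T i j" using m unfolding rgt_def by blast
      then show False using cnm2_br[OF H jT] nb by simp
    qed
    ultimately show ?thesis by blast
  qed
  show "\<exists>!i. (i,j) \<in> lv T" if hj: "j \<in> {1..n}" for j
  proof -
    obtain i0 where i0: "(i0,j) \<in> T" using cnm2_col[OF H, of j] hj by auto
    let ?S = "{i. (i,j) \<in> T}"
    have "?S \<subseteq> fst ` T" by force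
    then have finS: "finite ?S" using fin finite_subset by blast
    let ?m = "Max ?S"
    have m: "(?m,j) \<in> T" using Max_in[OF finS] i0 by auto
    have "\<not> below T ?m j" unfolding below_def using Max_ge[OF finS] by (auto simp: not_less[symmetric])
    then have "(?m,j) \<in> lv T" using m unfolding lv_iff by simp
    moreover have "i = ?m" if "(i,j) \<in> lv T" for i
    proof (rule ccontr)
      assume ne: "i \<noteq> ?m"
      have iT: "(i,j) \<in> T" and nb: "\<not> below T i j" using that unfolding lv_iff by auto
      have "i \<le> ?m" using Max_ge[OF finS] iT by auto
      then have "i < ?m" using ne by simp
      then have "below T i j" using m unfolding below_def by blast
      then show False using nb by simp
    qed
    ultimately show ?thesis by blast
  qed
qed

definition hh :: "nat \<Rightarrow> nat" where "hh i = (if i = 1 then 1 else Suc i)"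
definition psi :: "nat \<times> nat \<Rightarrow> nat \<times> nat" where "psi p = (hh (fst p), Suc (snd p))"
definition expA :: "(nat \<times> nat) set \<Rightarrow> (nat \<times> nat) set" where
  "expA T = insert (1,1) (insert (2,1) (psi ` T))"
definition eA :: "(nat \<times> nat) set \<Rightarrow> (nat \<times> nat) set" where
  "eA Q = insert (2,1) (psi ` Q)"
definition pos :: "(nat \<times> nat) set \<Rightarrow> bool" where
  "pos S \<longleftrightarrow> (\<forall>i j. (i,j) \<in> S \<longrightarrow> 1 \<le> i \<and> 1 \<le> j)"

lemma posD: "pos S \<Longrightarrow> (i,j) \<in> S \<Longrightarrow> 1 \<le> i \<and> 1 \<le> j" unfolding pos_def by blast
lemma cnm2_pos: "cnm2 n S \<Longrightarrow> pos S" unfolding pos_def using cnm2_sub by blast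

lemma hh_inj: "1 \<le> i \<Longrightarrow> 1 \<le> i' \<Longrightarrow> hh i = hh i' \<longleftrightarrow> i = i'" unfolding hh_def by auto
lemma hh_less: "1 \<le> i \<Longrightarrow> 1 \<le> i' \<Longrightarrow> hh i' < hh i \<longleftrightarrow> i' < i" unfolding hh_def by auto
lemma hh_ne2: "1 \<le> i \<Longrightarrow> hh i \<noteq> 2" unfolding hh_def by auto
lemma hh_1: "1 \<le> i \<Longrightarrow> hh i = 1 \<longleftrightarrow> i = 1" unfolding hh_def by auto
lemma hh_ge: "1 \<le> hh i" unfolding hh_def by auto

lemma psi_mem: "(a,b) \<in> psi ` S \<longleftrightarrow> (\<exists>i j. (i,j) \<in> S \<and> a = hh i \<and> b = Suc j)"
  unfolding psi_def by force

lemma expA_mem: "(a,b) \<in> expA S \<longleftrightarrow> (a,b) = (1,1) \<or> (a,b) = (2,1) \<or> (\<exists>i j. (i,j) \<in> S \<and> a = hh i \<and> b = Suc j)"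
  unfolding expA_def using psi_mem by auto

lemma psi_mem_psi: assumes p: "pos S" and i: "1 \<le> i" shows "(hh i, Suc j) \<in> psi ` S \<longleftrightarrow> (i,j) \<in> S"
proof
  assume "(hh i, Suc j) \<in> psi ` S"
  then obtain i' j' where h: "(i',j') \<in> S" "hh i = hh i'" "Suc j = Suc j'" unfolding psi_mem by blast
  have "1 \<le> i'" using posD[OF p h(1)] by simp
  then have "i' = i" using hh_inj[OF i \<open>1 \<le> i'\<close>] h(2) by blast
  then show "(i,j) \<in> S" using h by simp
next
  assume "(i,j) \<in> S"
  then show "(hh i, Suc j) \<in> psi ` S" unfolding psi_mem by blast
qed

lemma expA_mem_psi: "pos S \<Longrightarrow> 1 \<le> i \<Longrightarrow> 1 \<le> j \<Longrightarrow> (hh i, Suc j) \<in> expA S \<longleftrightarrow> (i,j) \<in> S"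
  unfolding expA_def using psi_mem_psi by simp

lemma eA_mem_psi: "pos S \<Longrightarrow> 1 \<le> i \<Longrightarrow> 1 \<le> j \<Longrightarrow> (hh i, Suc j) \<in> eA S \<longleftrightarrow> (i,j) \<in> S"
  unfolding eA_def using psi_mem_psi by simp

lemma abv_E:
  assumes p: "pos S" and i: "1 \<le> i" and j: "1 \<le> j"
  shows "abv (expA S) (hh i) (Suc j) \<longleftrightarrow> abv S i j"
proof
  assume "abv (expA S) (hh i) (Suc j)"
  then obtain a where a: "a < hh i" "(a, Suc j) \<in> expA S" unfolding abv_def by blast
  then obtain i' where i': "(i',j) \<in> S" "a = hh i'" unfolding expA_mem using j by auto
  have "1 \<le> i'" using posD[OF p i'(1)] by simp
  then have "i' < i" using a(1) i'(2) hh_less i by simp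
  then show "abv S i j" using i'(1) by (rule abvI)
next
  assume "abv S i j"
  then obtain i' where i': "i' < i" "(i',j) \<in> S" unfolding abv_def by blast
  have "1 \<le> i'" using posD[OF p i'(2)] by simp
  then have "hh i' < hh i" using hh_less i i'(1) by simp
  moreover have "(hh i', Suc j) \<in> expA S" using expA_mem_psi[OF p \<open>1 \<le> i'\<close> j] i'(2) by simp
  ultimately show "abv (expA S) (hh i) (Suc j)" by (rule abvI)
qed

lemma below_E:
  assumes p: "pos S" and i: "1 \<le> i" and j: "1 \<le> j"
  shows "below (expA S) (hh i) (Suc j) \<longleftrightarrow> below S i j"
proof
  assume "below (expA S) (hh i) (Suc j)"
  then obtain a where a: "hh i < a" "(a, Suc j) \<in> expA S" unfolding below_def by blast
  then obtain i' where i': "(i',j) \<in> S" "a = hh i'" unfolding expA_mem using j by auto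
  have "1 \<le> i'" using posD[OF p i'(1)] by simp
  then have "i < i'" using a(1) i'(2) hh_less i by simp
  then show "below S i j" using i'(1) by (rule belowI)
next
  assume "below S i j"
  then obtain i' where i': "i < i'" "(i',j) \<in> S" unfolding below_def by blast
  have "1 \<le> i'" using posD[OF p i'(2)] by simp
  then have "hh i < hh i'" using hh_less i i'(1) by simp
  moreover have "(hh i', Suc j) \<in> expA S" using expA_mem_psi[OF p \<open>1 \<le> i'\<close> j] i'(2) by simp
  ultimately show "below (expA S) (hh i) (Suc j)" by (rule belowI)
qed

lemma lft_E:
  assumes p: "pos S" and i: "1 \<le> i" and j: "1 \<le> j"
  shows "lft (expA S) (hh i) (Suc j) \<longleftrightarrow> lft S i j \<or> i = 1"
proof
  assume "lft (expA S) (hh i) (Suc j)"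
  then obtain b where b: "b < Suc j" "(hh i, b) \<in> expA S" unfolding lft_def by blast
  from b(2) consider "(hh i, b) = (1,1)" | "(hh i, b) = (2,1)" | i' j' where "(i',j') \<in> S" "hh i = hh i'" "b = Suc j'"
    unfolding expA_mem by blast
  then show "lft S i j \<or> i = 1"
  proof cases
    case 1 then show ?thesis using hh_1 i by simp
  next
    case 2 then show ?thesis using hh_ne2 i by simp
  next
    case 3
    have "1 \<le> i'" using posD[OF p 3(1)] by simp
    then have "i' = i" using 3(2) hh_inj i by simp
    then show ?thesis using 3 b(1) lftI[of j' j i S] by simp
  qed
next
  assume "lft S i j \<or> i = 1"
  then show "lft (expA S) (hh i) (Suc j)"
  proof
    assume "lft S i j"
    then obtain j' where j': "j' < j" "(i,j') \<in> S" unfolding lft_def by blast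
    have "1 \<le> j'" using posD[OF p j'(2)] by simp
    have "(hh i, Suc j') \<in> expA S" using expA_mem_psi[OF p i \<open>1 \<le> j'\<close>] j'(2) by simp
    then show ?thesis using j'(1) lftI[of "Suc j'" "Suc j"] by simp
  next
    assume "i = 1"
    then have "hh i = 1" using hh_1 by simp
    moreover have "(1,1) \<in> expA S" unfolding expA_def by simp
    ultimately show ?thesis using lftI[of 1 "Suc j" 1 "expA S"] j by simp
  qed
qed

lemma rgt_E:
  assumes p: "pos S" and i: "1 \<le> i" and j: "1 \<le> j"
  shows "rgt (expA S) (hh i) (Suc j) \<longleftrightarrow> rgt S i j"
proof
  assume "rgt (expA S) (hh i) (Suc j)"
  then obtain b where b: "Suc j < b" "(hh i, b) \<in> expA S" unfolding rgt_def by blast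
  from b(2) consider "(hh i, b) = (1,1)" | "(hh i, b) = (2,1)" | i' j' where "(i',j') \<in> S" "hh i = hh i'" "b = Suc j'"
    unfolding expA_mem by blast
  then show "rgt S i j"
  proof cases
    case 1 then show ?thesis using b(1) by simp
  next
    case 2 then show ?thesis using b(1) by simp
  next
    case 3
    have "1 \<le> i'" using posD[OF p 3(1)] by simp
    then have "i' = i" using 3(2) hh_inj i by simp
    then show ?thesis using 3 b(1) rgtI[of j j' i S] by simp
  qed
next
  assume "rgt S i j"
  then obtain j' where j': "j < j'" "(i,j') \<in> S" unfolding rgt_def by blast
  have "1 \<le> j'" using posD[OF p j'(2)] by simp
  have "(hh i, Suc j') \<in> expA S" using expA_mem_psi[OF p i \<open>1 \<le> j'\<close>] j'(2) by simp
  then show "rgt (expA S) (hh i) (Suc j)" using j'(1) rgtI[of "Suc j" "Suc j'"] by simp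
qed


lemma abv_row1: "pos S \<Longrightarrow> \<not> abv S 1 j"
  unfolding abv_def using posD by fastforce

lemma psi_notin0: "pos S \<Longrightarrow> (a, Suc 0) \<notin> psi ` S"
  unfolding psi_mem using posD by fastforce

lemma E11: "(1,1) \<in> expA S" and E21: "(2,1) \<in> expA S" unfolding expA_def by auto

lemma E21_nbelow: assumes p: "pos S" shows "\<not> below (expA S) 2 1"
proof
  assume "below (expA S) 2 1"
  then obtain a where a: "2 < a" "(a,1) \<in> expA S" unfolding below_def by blast
  then show False unfolding expA_mem using posD[OF p] by fastforce
qed

lemma E21_nrgt: assumes p: "pos S" shows "\<not> rgt (expA S) 2 1"
proof
  assume "rgt (expA S) 2 1"
  then obtain b where b: "1 < b" "(2,b) \<in> expA S" unfolding rgt_def by blast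
  then obtain i j where "(i,j) \<in> S" "2 = hh i" unfolding expA_mem by auto
  then show False using hh_ne2 posD[OF p] by metis
qed

lemma E21_nlft: "\<not> lft (expA S) 2 1"
proof
  assume "lft (expA S) 2 1"
  then obtain b where b: "b < 1" "(2,b) \<in> expA S" unfolding lft_def by blast
  then show False unfolding expA_mem by auto
qed

lemma expA_cnm:
  assumes H: "cnm2 m S" shows "cnm2 (Suc m) (expA S)"
proof (rule cnm2I)
  have p: "pos S" using cnm2_pos[OF H] .
  have m1: "1 \<le> m" using cnm2_sub[OF H cnm2_root[OF H]] by simp
  show "expA S \<subseteq> {1..Suc m} \<times> {1..Suc m}"
  proof
    fix x assume "x \<in> expA S"
    then obtain a b where x: "x = (a,b)" "(a,b) \<in> expA S" by (cases x) auto
    from x(2) show "x \<in> {1..Suc m} \<times> {1..Suc m}" unfolding expA_mem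
      using x(1) m1 cnm2_sub[OF H] unfolding hh_def by auto
  qed
  show "(1,1) \<in> expA S" by (rule E11)
  show "abv (expA S) a b \<noteq> lft (expA S) a b" if ab: "(a,b) \<in> expA S" "(a,b) \<noteq> (1,1)" for a b
  proof -
    from ab consider "(a,b) = (2,1)" | i j where "(i,j) \<in> S" "a = hh i" "b = Suc j"
      unfolding expA_mem by blast
    then show ?thesis
    proof cases
      case 1
      have "abv (expA S) 2 1" using E11 by (intro abvI[of 1]) auto
      then show ?thesis using 1 E21_nlft by auto
    next
      case 2
      have ij: "1 \<le> i" "1 \<le> j" using posD[OF p 2(1)] by auto
      show ?thesis
      proof (cases "i = 1")
        case True
        then show ?thesis using 2 abv_E[OF p ij] lft_E[OF p ij] abv_row1[OF p] by simp
      next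
        case False
        then have "(i,j) \<noteq> (1,1)" by simp
        then have "abv S i j \<noteq> lft S i j" using cnm2_c2[OF H 2(1)] by simp
        then show ?thesis using 2 abv_E[OF p ij] lft_E[OF p ij] False by simp
      qed
    qed
  qed
  show "\<exists>b. (a,b) \<in> expA S" if a: "1 \<le> a" "a \<le> Suc m" for a
  proof -
    consider "a = 1" | "a = 2" | "3 \<le> a" using a by linarith
    then show ?thesis
    proof cases
      case 1 then show ?thesis using E11 by blast
    next
      case 2 then show ?thesis using E21 by blast
    next
      case 3
      have "1 \<le> a - 1" "a - 1 \<le> m" using a 3 by auto
      then obtain j where j: "(a - 1, j) \<in> S" using cnm2_row[OF H, of "a - 1"] by blast
      have "hh (a - 1) = a" using 3 unfolding hh_def by auto
      then have "(a, Suc j) \<in> expA S" using j unfolding expA_mem by metis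
      then show ?thesis by blast
    qed
  qed
  show "\<exists>a. (a,b) \<in> expA S" if b: "1 \<le> b" "b \<le> Suc m" for b
  proof (cases "b = 1")
    case True then show ?thesis using E11 by blast
  next
    case False
    have "1 \<le> b - 1" "b - 1 \<le> m" using b False by auto
    then obtain i where i: "(i, b - 1) \<in> S" using cnm2_col[OF H, of "b - 1"] by blast
    have "(hh i, Suc (b - 1)) \<in> expA S" using i unfolding expA_mem by blast
    moreover have "Suc (b - 1) = b" using b False by simp
    ultimately show ?thesis by (intro exI[of _ "hh i"]) simp
  qed
  show "below (expA S) a b \<longleftrightarrow> rgt (expA S) a b" if ab: "(a,b) \<in> expA S" for a b
  proof -
    from ab consider "(a,b) = (1,1)" | "(a,b) = (2,1)" | i j where "(i,j) \<in> S" "a = hh i" "b = Suc j"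
      unfolding expA_mem by blast
    then show ?thesis
    proof cases
      case 1
      have "below (expA S) 1 1" using E21 by (intro belowI[of _ 2]) auto
      moreover have "(hh 1, Suc 1) \<in> expA S" using cnm2_root[OF H] unfolding expA_mem by blast
      then have "rgt (expA S) 1 1" unfolding hh_def by (intro rgtI[of _ 2]) (auto simp: numeral_2_eq_2)
      ultimately show ?thesis using 1 by simp
    next
      case 2 then show ?thesis using E21_nbelow[OF p] E21_nrgt[OF p] by simp
    next
      case 3
      have ij: "1 \<le> i" "1 \<le> j" using posD[OF p 3(1)] by auto
      show ?thesis using 3 below_E[OF p ij] rgt_E[OF p ij] cnm2_br[OF H 3(1)] by simp
    qed
  qed
qed

lemma lv_expA:
  assumes H: "cnm2 m S" shows "lv (expA S) = eA (lv S)"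
proof -
  have p: "pos S" using cnm2_pos[OF H] .
  have pl: "pos (lv S)" using p unfolding pos_def lv_iff by blast
  have "(a,b) \<in> lv (expA S) \<longleftrightarrow> (a,b) \<in> eA (lv S)" for a b
  proof (cases "(a,b) = (1,1) \<or> (a,b) = (2,1)")
    case True
    have "below (expA S) 1 1" using E21 by (intro belowI[of _ 2]) auto
    moreover have "(1,1) \<notin> psi ` lv S" using psi_notin0[OF pl, of 1] by simp
    ultimately show ?thesis using True E21_nbelow[OF p] E21 unfolding lv_iff eA_def by auto
  next
    case False
    show ?thesis
    proof (cases "\<exists>i j. (i,j) \<in> S \<and> a = hh i \<and> b = Suc j")
      case True
      then obtain i j where ij: "(i,j) \<in> S" "a = hh i" "b = Suc j" by blast
      have ij1: "1 \<le> i" "1 \<le> j" using posD[OF p ij(1)] by auto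
      show ?thesis using ij below_E[OF p ij1] eA_mem_psi[OF pl ij1] expA_mem_psi[OF p ij1]
        unfolding lv_iff by simp
    next
      case F2: False
      have "(a,b) \<notin> expA S" using False F2 unfolding expA_mem by blast
      moreover have "(a,b) \<notin> eA (lv S)" using False F2 by (auto simp: eA_def psi_mem lv_iff)
      ultimately show ?thesis unfolding lv_iff by blast
    qed
  qed
  then show ?thesis by auto
qed


lemma expA_inj: assumes p: "pos S" "pos S'" and e: "expA S = expA S'" shows "S = S'"
proof -
  have "(i,j) \<in> S \<longleftrightarrow> (i,j) \<in> S'" for i j
  proof
    assume h: "(i,j) \<in> S"
    have ij: "1 \<le> i" "1 \<le> j" using posD[OF p(1) h] by auto
    show "(i,j) \<in> S'" using expA_mem_psi[OF p(1) ij] expA_mem_psi[OF p(2) ij] e h by simp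
  next
    assume h: "(i,j) \<in> S'"
    have ij: "1 \<le> i" "1 \<le> j" using posD[OF p(2) h] by auto
    show "(i,j) \<in> S" using expA_mem_psi[OF p(1) ij] expA_mem_psi[OF p(2) ij] e h by simp
  qed
  then show ?thesis by auto
qed

lemma eA_inj: assumes p: "pos S" "pos S'" and e: "eA S = eA S'" shows "S = S'"
proof -
  have "(i,j) \<in> S \<longleftrightarrow> (i,j) \<in> S'" for i j
  proof
    assume h: "(i,j) \<in> S"
    have ij: "1 \<le> i" "1 \<le> j" using posD[OF p(1) h] by auto
    show "(i,j) \<in> S'" using eA_mem_psi[OF p(1) ij] eA_mem_psi[OF p(2) ij] e h by simp
  next
    assume h: "(i,j) \<in> S'"
    have ij: "1 \<le> i" "1 \<le> j" using posD[OF p(2) h] by auto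
    show "(i,j) \<in> S" using eA_mem_psi[OF p(1) ij] eA_mem_psi[OF p(2) ij] e h by simp
  qed
  then show ?thesis by auto
qed

lemma expA_refl:
  assumes p: "pos S" and sub: "S \<subseteq> {1..m} \<times> {1..m}" and r: "(1,1) \<in> S"
    and H: "cnm2 (Suc m) (expA S)"
  shows "cnm2 m S"
proof (rule cnm2I)
  show "S \<subseteq> {1..m} \<times> {1..m}" by (rule sub)
  show "(1,1) \<in> S" by (rule r)
  show "abv S i j \<noteq> lft S i j" if ij: "(i,j) \<in> S" "(i,j) \<noteq> (1,1)" for i j
  proof -
    have ij1: "1 \<le> i" "1 \<le> j" using posD[OF p ij(1)] by auto
    show ?thesis
    proof (cases "i = 1")
      case True
      then have "2 \<le> j" using ij ij1 by auto
      then have "lft S i j" using r True by (intro lftI[of 1]) auto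
      then show ?thesis using abv_row1[OF p] True by simp
    next
      case False
      have m: "(hh i, Suc j) \<in> expA S" using expA_mem_psi[OF p ij1] ij(1) by simp
      have ne: "(hh i, Suc j) \<noteq> (1,1)" using ij1 by simp
      show ?thesis using cnm2_c2[OF H m ne] abv_E[OF p ij1] lft_E[OF p ij1] False by simp
    qed
  qed
  show "\<exists>j. (i,j) \<in> S" if i: "1 \<le> i" "i \<le> m" for i
  proof (cases "i = 1")
    case True then show ?thesis using r by blast
  next
    case False
    have "1 \<le> hh i" "hh i \<le> Suc m" using i False unfolding hh_def by auto
    then obtain b where b: "(hh i, b) \<in> expA S" using cnm2_row[OF H] by blast
    from b consider "(hh i, b) = (1,1)" | "(hh i, b) = (2,1)" | i' j' where "(i',j') \<in> S" "hh i = hh i'" "b = Suc j'"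
      unfolding expA_mem by blast
    then show ?thesis
    proof cases
      case 1 then show ?thesis using hh_1 i False by simp
    next
      case 2 then show ?thesis using hh_ne2 i by simp
    next
      case 3
      have "1 \<le> i'" using posD[OF p 3(1)] by simp
      then have "i' = i" using hh_inj[OF i(1) \<open>1 \<le> i'\<close>] 3(2) by blast
      then show ?thesis using 3(1) by blast
    qed
  qed
  show "\<exists>i. (i,j) \<in> S" if j: "1 \<le> j" "j \<le> m" for j
  proof -
    have "1 \<le> Suc j" "Suc j \<le> Suc m" using j by auto
    then obtain a where a: "(a, Suc j) \<in> expA S" using cnm2_col[OF H] by blast
    then obtain i' where "(i',j) \<in> S" unfolding expA_mem using j by auto
    then show ?thesis by blast
  qed
  show "below S i j \<longleftrightarrow> rgt S i j" if ij: "(i,j) \<in> S" for i j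
  proof -
    have ij1: "1 \<le> i" "1 \<le> j" using posD[OF p ij] by auto
    have m: "(hh i, Suc j) \<in> expA S" using expA_mem_psi[OF p ij1] ij by simp
    show ?thesis using cnm2_br[OF H m] below_E[OF p ij1] rgt_E[OF p ij1] by simp
  qed
qed

definition phi :: "nat \<times> nat \<Rightarrow> nat \<times> nat" where
  "phi p = (if fst p = 1 then 1 else fst p - 1, snd p - 1)"

lemma conA:
  assumes H: "cnm2 (Suc m) T" and l: "(2,1) \<in> lv T"
  shows "\<exists>S. cnm2 m S \<and> T = expA S"
proof -
  have t21: "(2,1) \<in> T" and nb: "\<not> below T 2 1" using l unfolding lv_iff by auto
  have nr: "\<not> rgt T 2 1" using cnm2_br[OF H t21] nb by simp
  have m1: "1 \<le> m" using cnm2_sub[OF H t21] by simp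
  have col1: "i \<le> 2" if "(i,1) \<in> T" for i
    using nb that belowI[of 2 i 1 T] by (cases "i \<le> 2") auto
  have row2: "j \<le> 1" if "(2,j) \<in> T" for j
    using nr that rgtI[of 1 j 2 T] by (cases "j \<le> 1") auto
  have t12: "(1,2) \<in> T"
  proof -
    obtain i0 where i0: "(i0,2) \<in> T" using cnm2_col[OF H, of 2] m1 by auto
    let ?r = "LEAST i. (i,2) \<in> T"
    have r: "(?r,2) \<in> T" using LeastI[of "\<lambda>i. (i,2) \<in> T", OF i0] .
    have na: "\<not> abv T ?r 2" unfolding abv_def using not_less_Least[of _ "\<lambda>i. (i,2) \<in> T"] by blast
    have ne: "(?r,2::nat) \<noteq> (1,1)" by simp
    have "lft T ?r 2" using cnm2_c2[OF H r ne] na by simp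
    then obtain j' where j': "j' < 2" "(?r,j') \<in> T" unfolding lft_def by auto
    have "j' = 1" using cnm2_sub[OF H j'(2)] j'(1) by auto
    then have r1: "(?r,1) \<in> T" using j' by simp
    have "?r \<ge> 1" using cnm2_sub[OF H r] by simp
    moreover have "?r \<le> 2" using col1[OF r1] .
    moreover have "?r \<noteq> 2" using row2[of 2] r by auto
    ultimately have "?r = 1" by linarith
    then show ?thesis using r by simp
  qed
  let ?R = "T - {(1,1),(2,1)}"
  define S where "S = phi ` ?R"
  have Rprop: "2 \<le> b \<and> a \<noteq> 2 \<and> 1 \<le> a \<and> a \<le> Suc m \<and> b \<le> Suc m" if "(a,b) \<in> ?R" for a b
  proof -
    have ab: "(a,b) \<in> T" "(a,b) \<noteq> (1,1)" "(a,b) \<noteq> (2,1)" using that by auto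
    have s: "1 \<le> a" "a \<le> Suc m" "1 \<le> b" "b \<le> Suc m" using cnm2_sub[OF H ab(1)] by auto
    have "b \<noteq> 1" using col1[of a] ab s by (cases "a = 1"; cases "a = 2") auto
    moreover have "a \<noteq> 2" using row2[of b] ab s \<open>b \<noteq> 1\<close> by auto
    ultimately show ?thesis using s by auto
  qed
  have psiphi: "psi (phi (a,b)) = (a,b)" if "(a,b) \<in> ?R" for a b
    using Rprop[OF that] unfolding psi_def phi_def hh_def by auto
  have pp: "psi (phi x) = x" if "x \<in> ?R" for x
  proof -
    obtain a b where x: "x = (a,b)" by (cases x)
    show ?thesis using psiphi[of a b] that x by simp
  qed
  have img: "psi ` S = ?R"
  proof -
    have "psi ` S = (\<lambda>x. psi (phi x)) ` ?R" unfolding S_def by (simp add: image_image)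
    also have "\<dots> = (\<lambda>x. x) ` ?R" by (rule image_cong[OF refl]) (rule pp)
    finally show ?thesis by simp
  qed
  have TE: "T = expA S" unfolding expA_def img using cnm2_root[OF H] t21 by auto
  have sub: "S \<subseteq> {1..m} \<times> {1..m}"
  proof
    fix x assume "x \<in> S"
    then obtain a b where ab: "(a,b) \<in> ?R" "x = phi (a,b)" unfolding S_def by auto
    show "x \<in> {1..m} \<times> {1..m}" using Rprop[OF ab(1)] ab(2) unfolding phi_def by auto
  qed
  have p: "pos S" using sub unfolding pos_def by auto
  have r: "(1,1) \<in> S"
  proof -
    have "(1,2) \<in> ?R" using t12 by auto
    moreover have "phi (1,2) = (1,1)" unfolding phi_def by simp
    ultimately show ?thesis unfolding S_def by (metis image_eqI)
  qed
  have "cnm2 m S" using expA_refl[OF p sub r] H TE by simp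
  then show ?thesis using TE by blast
qed

lemma abv_repl:
  assumes T2: "T2 = insert y (T - {x})"
    and R: "\<And>i'. i' < i \<Longrightarrow> (i',j) = x \<Longrightarrow> \<exists>i''<i. (i'',j) \<in> T2"
    and A: "\<And>i'. i' < i \<Longrightarrow> (i',j) = y \<Longrightarrow> abv T i j"
  shows "abv T2 i j = abv T i j"
proof
  assume "abv T2 i j"
  then obtain i' where h: "i' < i" "(i',j) \<in> T2" unfolding abv_def by blast
  show "abv T i j"
  proof (cases "(i',j) = y")
    case True then show ?thesis using A h by blast
  next
    case False then have "(i',j) \<in> T" using h T2 by auto
    then show ?thesis using h by (intro abvI)
  qed
next
  assume "abv T i j"
  then obtain i' where h: "i' < i" "(i',j) \<in> T" unfolding abv_def by blast
  show "abv T2 i j"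
  proof (cases "(i',j) = x")
    case True then show ?thesis using R h unfolding abv_def by blast
  next
    case False then have "(i',j) \<in> T2" using h T2 by auto
    then show ?thesis using h by (intro abvI)
  qed
qed

lemma lft_repl:
  assumes T2: "T2 = insert y (T - {x})"
    and R: "\<And>j'. j' < j \<Longrightarrow> (i,j') = x \<Longrightarrow> \<exists>j''<j. (i,j'') \<in> T2"
    and A: "\<And>j'. j' < j \<Longrightarrow> (i,j') = y \<Longrightarrow> lft T i j"
  shows "lft T2 i j = lft T i j"
proof
  assume "lft T2 i j"
  then obtain j' where h: "j' < j" "(i,j') \<in> T2" unfolding lft_def by blast
  show "lft T i j"
  proof (cases "(i,j') = y")
    case True then show ?thesis using A h by blast
  next
    case False then have "(i,j') \<in> T" using h T2 by auto
    then show ?thesis using h by (intro lftI)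
  qed
next
  assume "lft T i j"
  then obtain j' where h: "j' < j" "(i,j') \<in> T" unfolding lft_def by blast
  show "lft T2 i j"
  proof (cases "(i,j') = x")
    case True then show ?thesis using R h unfolding lft_def by blast
  next
    case False then have "(i,j') \<in> T2" using h T2 by auto
    then show ?thesis using h by (intro lftI)
  qed
qed

lemma below_repl:
  assumes T2: "T2 = insert y (T - {x})"
    and R: "\<And>i'. i < i' \<Longrightarrow> (i',j) = x \<Longrightarrow> \<exists>i''>i. (i'',j) \<in> T2"
    and A: "\<And>i'. i < i' \<Longrightarrow> (i',j) = y \<Longrightarrow> below T i j"
  shows "below T2 i j = below T i j"
proof
  assume "below T2 i j"
  then obtain i' where h: "i < i'" "(i',j) \<in> T2" unfolding below_def by blast
  show "below T i j"
  proof (cases "(i',j) = y")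
    case True then show ?thesis using A h by blast
  next
    case False then have "(i',j) \<in> T" using h T2 by auto
    then show ?thesis using h by (intro belowI)
  qed
next
  assume "below T i j"
  then obtain i' where h: "i < i'" "(i',j) \<in> T" unfolding below_def by blast
  show "below T2 i j"
  proof (cases "(i',j) = x")
    case True then show ?thesis using R h unfolding below_def by blast
  next
    case False then have "(i',j) \<in> T2" using h T2 by auto
    then show ?thesis using h by (intro belowI)
  qed
qed

lemma rgt_repl:
  assumes T2: "T2 = insert y (T - {x})"
    and R: "\<And>j'. j < j' \<Longrightarrow> (i,j') = x \<Longrightarrow> \<exists>j''>j. (i,j'') \<in> T2"
    and A: "\<And>j'. j < j' \<Longrightarrow> (i,j') = y \<Longrightarrow> rgt T i j"
  shows "rgt T2 i j = rgt T i j"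
proof
  assume "rgt T2 i j"
  then obtain j' where h: "j < j'" "(i,j') \<in> T2" unfolding rgt_def by blast
  show "rgt T i j"
  proof (cases "(i,j') = y")
    case True then show ?thesis using A h by blast
  next
    case False then have "(i,j') \<in> T" using h T2 by auto
    then show ?thesis using h by (intro rgtI)
  qed
next
  assume "rgt T i j"
  then obtain j' where h: "j < j'" "(i,j') \<in> T" unfolding rgt_def by blast
  show "rgt T2 i j"
  proof (cases "(i,j') = x")
    case True then show ?thesis using R h unfolding rgt_def by blast
  next
    case False then have "(i,j') \<in> T2" using h T2 by auto
    then show ?thesis using h by (intro rgtI)
  qed
qed

lemma lv_repl:
  assumes T2: "T2 = insert y (T - {x})" and x: "x \<notin> lv T" and y: "y \<notin> lv T2"
    and bel: "\<And>i j. (i,j) \<in> T \<Longrightarrow> (i,j) \<noteq> x \<Longrightarrow> (i,j) \<noteq> y \<Longrightarrow> below T2 i j = below T i j"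
    and yT: "y \<notin> T" and xy: "x \<noteq> y"
  shows "lv T2 = lv T"
proof -
  have "(i,j) \<in> lv T2 \<longleftrightarrow> (i,j) \<in> lv T" for i j
  proof (cases "(i,j) = x \<or> (i,j) = y")
    case True
    have "x \<notin> T2" using T2 xy by auto
    then have "x \<notin> lv T2" unfolding lv_def by auto
    moreover have "y \<notin> lv T" using yT unfolding lv_def by auto
    ultimately show ?thesis using True x y by auto
  next
    case False then show ?thesis using bel[of i j] T2 unfolding lv_iff by auto
  qed
  then show ?thesis by auto
qed


lemma move1:
  assumes H: "cnm2 N T" and t12: "(1,2) \<in> T" and t21: "(2,1) \<in> T"
    and l21: "(2,1) \<notin> lv T" and l12: "(1,2) \<notin> lv T"
  shows "\<exists>T2. cnm2 N T2 \<and> lv T2 = lv T \<and> T2 \<noteq> T"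
proof -
  define T2 where "T2 = insert (2,2) (T - {(2,1)})"
  have pT: "\<And>i j. (i,j) \<in> T \<Longrightarrow> 1 \<le> i \<and> i \<le> N \<and> 1 \<le> j \<and> j \<le> N" using cnm2_sub[OF H] by blast
  have t11: "(1,1) \<in> T" using cnm2_root[OF H] .
  have n22: "(2,2) \<notin> T"
  proof
    assume h: "(2,2) \<in> T"
    have "abv T 2 2" using t12 by (intro abvI[of 1]) auto
    moreover have "lft T 2 2" using t21 by (intro lftI[of 1]) auto
    ultimately show False using cnm2_c2[OF H h] by simp
  qed
  have "below T 2 1" using l21 t21 unfolding lv_iff by simp
  then obtain a1 where a1: "2 < a1" "(a1,1) \<in> T" unfolding below_def by blast
  have "rgt T 2 1" using cnm2_br[OF H t21] \<open>below T 2 1\<close> by simp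
  then obtain b1 where b1': "1 < b1" "(2,b1) \<in> T" unfolding rgt_def by blast
  have b1: "2 < b1" using b1' n22 by (cases "b1 = 2") auto
  have "below T 1 2" using l12 t12 unfolding lv_iff by simp
  then obtain a2' where a2': "1 < a2'" "(a2',2) \<in> T" unfolding below_def by blast
  have a2: "2 < a2'" using a2' n22 by (cases "a2' = 2") auto
  have N2: "2 \<le> N" using pT[OF t21] by simp
  have abvR: "abv T2 i j = abv T i j" if "(i,j) \<in> T" "(i,j) \<noteq> (2,1)" for i j
  proof (rule abv_repl[OF T2_def])
    show "\<exists>i''<i. (i'',j) \<in> T2" if "i' < i" "(i',j) = (2,1)" for i'
      using that t11 unfolding T2_def by (intro exI[of _ 1]) auto
    show "abv T i j" if "i' < i" "(i',j) = (2,2)" for i'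
      using that t12 by (intro abvI[of 1]) auto
  qed
  have lftR: "lft T2 i j = lft T i j" if "(i,j) \<in> T" "(i,j) \<noteq> (2,1)" for i j
  proof (rule lft_repl[OF T2_def])
    show "\<exists>j''<j. (i,j'') \<in> T2" if "j' < j" "(i,j') = (2,1)" for j'
    proof -
      have "j \<noteq> 2" using that \<open>(i,j) \<in> T\<close> n22 by auto
      then show ?thesis using that unfolding T2_def by (intro exI[of _ 2]) auto
    qed
    show "lft T i j" if "j' < j" "(i,j') = (2,2)" for j'
      using that t21 by (intro lftI[of 1]) auto
  qed
  have belR: "below T2 i j = below T i j" if "(i,j) \<in> T" "(i,j) \<noteq> (2,1)" for i j
  proof (rule below_repl[OF T2_def])
    show "\<exists>i''>i. (i'',j) \<in> T2" if "i < i'" "(i',j) = (2,1)" for i'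
      using that a1 unfolding T2_def by (intro exI[of _ a1]) auto
    show "below T i j" if "i < i'" "(i',j) = (2,2)" for i'
      using that a2 a2' by (intro belowI[of _ a2']) auto
  qed
  have rgtR: "rgt T2 i j = rgt T i j" if "(i,j) \<in> T" "(i,j) \<noteq> (2,1)" for i j
  proof (rule rgt_repl[OF T2_def])
    show "\<exists>j''>j. (i,j'') \<in> T2" if "j < j'" "(i,j') = (2,1)" for j'
      using that unfolding T2_def by (intro exI[of _ 2]) auto
    show "rgt T i j" if "j < j'" "(i,j') = (2,2)" for j'
      using that b1 b1' by (intro rgtI[of _ b1]) auto
  qed
  have b22: "below T2 2 2" using a2 a2' unfolding T2_def by (intro belowI[of _ a2']) auto
  have r22: "rgt T2 2 2" using b1 b1' unfolding T2_def by (intro rgtI[of _ b1]) auto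
  have C: "cnm2 N T2"
  proof (rule cnm2I)
    show "T2 \<subseteq> {1..N} \<times> {1..N}" using cnm2_sub[OF H] N2 unfolding T2_def by auto
    show "(1,1) \<in> T2" using t11 unfolding T2_def by auto
    show "abv T2 i j \<noteq> lft T2 i j" if ij: "(i,j) \<in> T2" "(i,j) \<noteq> (1,1)" for i j
    proof (cases "(i,j) = (2,2)")
      case True
      have "abv T2 2 2" using t12 unfolding T2_def by (intro abvI[of 1]) auto
      moreover have "\<not> lft T2 2 2"
      proof
        assume "lft T2 2 2"
        then obtain j' where j': "j' < 2" "(2,j') \<in> T2" unfolding lft_def by blast
        then have "(2,j') \<in> T" "j' \<noteq> 1" unfolding T2_def by auto
        then show False using j'(1) pT by fastforce
      qed
      ultimately show ?thesis using True by simp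
    next
      case False
      then have "(i,j) \<in> T" "(i,j) \<noteq> (2,1)" using ij unfolding T2_def by auto
      then show ?thesis using abvR lftR cnm2_c2[OF H] ij(2) by metis
    qed
    show "\<exists>j. (i,j) \<in> T2" if hi: "1 \<le> i" "i \<le> N" for i
    proof -
      obtain j where j: "(i,j) \<in> T" using cnm2_row[OF H hi] by blast
      then show ?thesis unfolding T2_def by (cases "(i,j) = (2,1)") auto
    qed
    show "\<exists>i. (i,j) \<in> T2" if hj: "1 \<le> j" "j \<le> N" for j
    proof -
      obtain i where i: "(i,j) \<in> T" using cnm2_col[OF H hj] by blast
      then show ?thesis using t11 unfolding T2_def by (cases "(i,j) = (2,1)") auto
    qed
    show "below T2 i j \<longleftrightarrow> rgt T2 i j" if ij: "(i,j) \<in> T2" for i j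
    proof (cases "(i,j) = (2,2)")
      case True then show ?thesis using b22 r22 by simp
    next
      case False
      then have "(i,j) \<in> T" "(i,j) \<noteq> (2,1)" using ij unfolding T2_def by auto
      then show ?thesis using belR rgtR cnm2_br[OF H] by metis
    qed
  qed
  have L: "lv T2 = lv T"
  proof (rule lv_repl[OF T2_def l21])
    show "(2,2) \<notin> lv T2" using b22 unfolding lv_iff by simp
    show "below T2 i j = below T i j" if "(i,j) \<in> T" "(i,j) \<noteq> (2,1)" "(i,j) \<noteq> (2,2)" for i j
      using belR that by blast
    show "(2,2) \<notin> T" by (rule n22)
    show "((2::nat),(1::nat)) \<noteq> (2,2)" by simp
  qed
  have "T2 \<noteq> T" using n22 unfolding T2_def by auto
  then show ?thesis using C L by blast
qed


lemma repl_cnm: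
  assumes H: "cnm2 N T" and T2: "T2 = insert (ya,yb) (T - {(xa,xb)})"
    and xT: "(xa,xb) \<in> T" and yT: "(ya,yb) \<notin> T" and yN: "1 \<le> ya" "ya \<le> N" "1 \<le> yb" "yb \<le> N"
    and xr: "(xa,xb) \<noteq> (1,1)" and xl: "(xa,xb) \<notin> lv T"
    and c2y: "abv T2 ya yb \<noteq> lft T2 ya yb"
    and c2o: "\<And>i j. (i,j) \<in> T \<Longrightarrow> (i,j) \<noteq> (xa,xb) \<Longrightarrow> (i,j) \<noteq> (1,1) \<Longrightarrow> abv T2 i j \<noteq> lft T2 i j"
    and rowx: "\<exists>j. (xa,j) \<in> T2" and colx: "\<exists>i. (i,xb) \<in> T2"
    and by1: "below T2 ya yb" and by2: "rgt T2 ya yb"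
    and bro: "\<And>i j. (i,j) \<in> T \<Longrightarrow> (i,j) \<noteq> (xa,xb) \<Longrightarrow> below T2 i j = below T i j \<and> rgt T2 i j = rgt T i j"
  shows "cnm2 N T2 \<and> lv T2 = lv T \<and> T2 \<noteq> T"
proof (intro conjI)
  have xy: "(xa,xb) \<noteq> (ya,yb)" using xT yT by auto
  show "cnm2 N T2"
  proof (rule cnm2I)
    show "T2 \<subseteq> {1..N} \<times> {1..N}" using cnm2_sub[OF H] yN unfolding T2 by auto
    show "(1,1) \<in> T2" using cnm2_root[OF H] xr unfolding T2 by auto
    show "abv T2 i j \<noteq> lft T2 i j" if ij: "(i,j) \<in> T2" "(i,j) \<noteq> (1,1)" for i j
    proof (cases "(i,j) = (ya,yb)")
      case True then show ?thesis using c2y by simp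
    next
      case False
      then have "(i,j) \<in> T" "(i,j) \<noteq> (xa,xb)" using ij unfolding T2 by auto
      then show ?thesis using c2o ij(2) by blast
    qed
    show "\<exists>j. (i,j) \<in> T2" if hi: "1 \<le> i" "i \<le> N" for i
    proof -
      obtain j where j: "(i,j) \<in> T" using cnm2_row[OF H hi] by blast
      show ?thesis
      proof (cases "(i,j) = (xa,xb)")
        case True then show ?thesis using rowx by auto
      next
        case False then show ?thesis using j unfolding T2 by blast
      qed
    qed
    show "\<exists>i. (i,j) \<in> T2" if hj: "1 \<le> j" "j \<le> N" for j
    proof -
      obtain i where i: "(i,j) \<in> T" using cnm2_col[OF H hj] by blast
      show ?thesis
      proof (cases "(i,j) = (xa,xb)")
        case True then show ?thesis using colx by auto
      next
        case False then show ?thesis using i unfolding T2 by blast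
      qed
    qed
    show "below T2 i j \<longleftrightarrow> rgt T2 i j" if ij: "(i,j) \<in> T2" for i j
    proof (cases "(i,j) = (ya,yb)")
      case True then show ?thesis using by1 by2 by simp
    next
      case False
      then have "(i,j) \<in> T" "(i,j) \<noteq> (xa,xb)" using ij unfolding T2 by auto
      then show ?thesis using bro cnm2_br[OF H] by metis
    qed
  qed
  show "lv T2 = lv T"
  proof (rule lv_repl[OF T2 xl _ _ yT xy])
    show "(ya,yb) \<notin> lv T2" using by1 unfolding lv_iff by simp
    show "below T2 i j = below T i j" if "(i,j) \<in> T" "(i,j) \<noteq> (xa,xb)" "(i,j) \<noteq> (ya,yb)" for i j
      using bro that by blast
  qed
  show "T2 \<noteq> T" using yT unfolding T2 by auto
qed


lemma move2a:
  assumes H: "cnm2 N T" and n21: "(2,1) \<notin> T" and t12: "(1,2) \<in> T" and t22: "(2,2) \<in> T"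
    and a0: "2 < a0" "(a0,1) \<in> T"
  shows "\<exists>T2. cnm2 N T2 \<and> lv T2 = lv T \<and> T2 \<noteq> T"
proof -
  define T2 where "T2 = insert (2,1) (T - {(1,2)})"
  have pT: "\<And>i j. (i,j) \<in> T \<Longrightarrow> 1 \<le> i \<and> i \<le> N \<and> 1 \<le> j \<and> j \<le> N" using cnm2_sub[OF H] by blast
  have t11: "(1,1) \<in> T" using cnm2_root[OF H] .
  have N2: "2 \<le> N" using pT[OF t22] by simp
  have b12: "below T 1 2" using t22 by (intro belowI[of _ 2]) auto
  then have "rgt T 1 2" using cnm2_br[OF H t12] by simp
  then obtain b1 where b1: "2 < b1" "(1,b1) \<in> T" unfolding rgt_def by blast
  have abvR: "abv T2 i j = abv T i j" if "(i,j) \<in> T" "(i,j) \<noteq> (1,2)" "(i,j) \<noteq> (2,2)" for i j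
  proof (rule abv_repl[OF T2_def])
    show "\<exists>i''<i. (i'',j) \<in> T2" if "i' < i" "(i',j) = (1,2)" for i'
    proof -
      have "i \<noteq> 2" "j = 2" using that \<open>(i,j) \<noteq> (2,2)\<close> by auto
      then show ?thesis using that t22 unfolding T2_def by (intro exI[of _ 2]) auto
    qed
    show "abv T i j" if "i' < i" "(i',j) = (2,1)" for i'
      using that t11 by (intro abvI[of 1]) auto
  qed
  have lftR: "lft T2 i j = lft T i j" if "(i,j) \<in> T" "(i,j) \<noteq> (1,2)" "(i,j) \<noteq> (2,2)" for i j
  proof (rule lft_repl[OF T2_def])
    show "\<exists>j''<j. (i,j'') \<in> T2" if "j' < j" "(i,j') = (1,2)" for j'
      using that t11 unfolding T2_def by (intro exI[of _ 1]) auto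
    show "lft T i j" if "j' < j" "(i,j') = (2,1)" for j'
    proof -
      have "j \<noteq> 2" "i = 2" using that \<open>(i,j) \<noteq> (2,2)\<close> by auto
      then show ?thesis using that t22 by (intro lftI[of 2]) auto
    qed
  qed
  have belR: "below T2 i j = below T i j" if "(i,j) \<in> T" "(i,j) \<noteq> (1,2)" for i j
  proof (rule below_repl[OF T2_def])
    show "\<exists>i''>i. (i'',j) \<in> T2" if "i < i'" "(i',j) = (1,2)" for i'
      using that pT[OF \<open>(i,j) \<in> T\<close>] by auto
    show "below T i j" if "i < i'" "(i',j) = (2,1)" for i'
      using that a0 by (intro belowI[of _ a0]) auto
  qed
  have rgtR: "rgt T2 i j = rgt T i j" if "(i,j) \<in> T" "(i,j) \<noteq> (1,2)" for i j
  proof (rule rgt_repl[OF T2_def])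
    show "\<exists>j''>j. (i,j'') \<in> T2" if "j < j'" "(i,j') = (1,2)" for j'
      using that b1 unfolding T2_def by (intro exI[of _ b1]) auto
    show "rgt T i j" if "j < j'" "(i,j') = (2,1)" for j'
      using that pT[OF \<open>(i,j) \<in> T\<close>] by auto
  qed
  have "cnm2 N T2 \<and> lv T2 = lv T \<and> T2 \<noteq> T"
  proof (rule repl_cnm[OF H T2_def t12 n21])
    show "1 \<le> (2::nat)" "(2::nat) \<le> N" "1 \<le> (1::nat)" "(1::nat) \<le> N" using N2 by auto
    show "((1::nat),(2::nat)) \<noteq> (1,1)" by simp
    show "(1,2) \<notin> lv T" using b12 unfolding lv_iff by simp
    show "abv T2 2 1 \<noteq> lft T2 2 1"
    proof -
      have "abv T2 2 1" using t11 unfolding T2_def by (intro abvI[of 1]) auto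
      moreover have "\<not> lft T2 2 1"
      proof
        assume "lft T2 2 1"
        then obtain j' where j': "j' < 1" "(2,j') \<in> T2" unfolding lft_def by blast
        then have "(2,j') \<in> T" unfolding T2_def by auto
        then show False using j'(1) pT by fastforce
      qed
      ultimately show ?thesis by simp
    qed
    show "abv T2 i j \<noteq> lft T2 i j" if ij: "(i,j) \<in> T" "(i,j) \<noteq> (1,2)" "(i,j) \<noteq> (1,1)" for i j
    proof (cases "(i,j) = (2,2)")
      case True
      have "\<not> abv T2 2 2"
      proof
        assume "abv T2 2 2"
        then obtain i' where i': "i' < 2" "(i',2) \<in> T2" unfolding abv_def by blast
        then have "(i',2) \<in> T" "i' \<noteq> 1" unfolding T2_def by auto
        then show False using i'(1) pT by fastforce
      qed
      moreover have "lft T2 2 2" unfolding T2_def by (intro lftI[of 1]) auto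
      ultimately show ?thesis using True by simp
    next
      case False
      then show ?thesis using abvR[OF ij(1,2) False] lftR[OF ij(1,2) False] cnm2_c2[OF H ij(1,3)] by simp
    qed
    show "\<exists>j. (1,j) \<in> T2" using t11 unfolding T2_def by blast
    show "\<exists>i. (i,2) \<in> T2" using t22 unfolding T2_def by blast
    show "below T2 2 1" using a0 unfolding T2_def by (intro belowI[of _ a0]) auto
    show "rgt T2 2 1" using t22 unfolding T2_def by (intro rgtI[of _ 2]) auto
    show "below T2 i j = below T i j \<and> rgt T2 i j = rgt T i j" if "(i,j) \<in> T" "(i,j) \<noteq> (1,2)" for i j
      using belR[OF that] rgtR[OF that] by simp
  qed
  then show ?thesis by blast
qed


lemma move2b:
  assumes H: "cnm2 N T" and n21: "(2,1) \<notin> T" and c3: "3 \<le> c" and t2c: "(2,c) \<in> T"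
    and t1c: "(1,c) \<in> T" and cmin: "\<And>j. (2,j) \<in> T \<Longrightarrow> c \<le> j" and nl: "(2,c) \<notin> lv T"
    and a0: "2 < a0" "(a0,1) \<in> T"
  shows "\<exists>T2. cnm2 N T2 \<and> lv T2 = lv T \<and> T2 \<noteq> T"
proof -
  define T2 where "T2 = insert (2,1) (T - {(2,c)})"
  have pT: "\<And>i j. (i,j) \<in> T \<Longrightarrow> 1 \<le> i \<and> i \<le> N \<and> 1 \<le> j \<and> j \<le> N" using cnm2_sub[OF H] by blast
  have t11: "(1,1) \<in> T" using cnm2_root[OF H] .
  have N2: "2 \<le> N" using pT[OF t2c] by simp
  have "below T 2 c" using nl t2c unfolding lv_iff by simp
  then obtain a3 where a3: "2 < a3" "(a3,c) \<in> T" unfolding below_def by blast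
  have "rgt T 2 c" using cnm2_br[OF H t2c] \<open>below T 2 c\<close> by simp
  then obtain b3 where b3: "c < b3" "(2,b3) \<in> T" unfolding rgt_def by blast
  have abvR: "abv T2 i j = abv T i j" if "(i,j) \<in> T" "(i,j) \<noteq> (2,c)" for i j
  proof (rule abv_repl[OF T2_def])
    show "\<exists>i''<i. (i'',j) \<in> T2" if "i' < i" "(i',j) = (2,c)" for i'
      using that t1c unfolding T2_def by (intro exI[of _ 1]) auto
    show "abv T i j" if "i' < i" "(i',j) = (2,1)" for i'
      using that t11 by (intro abvI[of 1]) auto
  qed
  have lftR: "lft T2 i j = lft T i j" if "(i,j) \<in> T" "(i,j) \<noteq> (2,c)" for i j
  proof (rule lft_repl[OF T2_def])
    show "\<exists>j''<j. (i,j'') \<in> T2" if "j' < j" "(i,j') = (2,c)" for j'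
      using that c3 unfolding T2_def by (intro exI[of _ 1]) auto
    show "lft T i j" if "j' < j" "(i,j') = (2,1)" for j'
    proof -
      have "i = 2" using that by auto
      then have "c \<le> j" "j \<noteq> c" using cmin \<open>(i,j) \<in> T\<close> \<open>(i,j) \<noteq> (2,c)\<close> by auto
      then show ?thesis using t2c \<open>i = 2\<close> by (intro lftI[of c]) auto
    qed
  qed
  have belR: "below T2 i j = below T i j" if "(i,j) \<in> T" "(i,j) \<noteq> (2,c)" for i j
  proof (rule below_repl[OF T2_def])
    show "\<exists>i''>i. (i'',j) \<in> T2" if "i < i'" "(i',j) = (2,c)" for i'
      using that a3 unfolding T2_def by (intro exI[of _ a3]) auto
    show "below T i j" if "i < i'" "(i',j) = (2,1)" for i'
      using that a0 by (intro belowI[of _ a0]) auto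
  qed
  have rgtR: "rgt T2 i j = rgt T i j" if "(i,j) \<in> T" "(i,j) \<noteq> (2,c)" for i j
  proof (rule rgt_repl[OF T2_def])
    show "\<exists>j''>j. (i,j'') \<in> T2" if "j < j'" "(i,j') = (2,c)" for j'
      using that cmin[of j] \<open>(i,j) \<in> T\<close> by auto
    show "rgt T i j" if "j < j'" "(i,j') = (2,1)" for j'
      using that pT[OF \<open>(i,j) \<in> T\<close>] by auto
  qed
  have "cnm2 N T2 \<and> lv T2 = lv T \<and> T2 \<noteq> T"
  proof (rule repl_cnm[OF H T2_def t2c n21])
    show "1 \<le> (2::nat)" "(2::nat) \<le> N" "1 \<le> (1::nat)" "(1::nat) \<le> N" using N2 by auto
    show "((2::nat),c) \<noteq> (1,1)" by simp
    show "(2,c) \<notin> lv T" by (rule nl)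
    show "abv T2 2 1 \<noteq> lft T2 2 1"
    proof -
      have "abv T2 2 1" using t11 c3 unfolding T2_def by (intro abvI[of 1]) auto
      moreover have "\<not> lft T2 2 1"
      proof
        assume "lft T2 2 1"
        then obtain j' where j': "j' < 1" "(2,j') \<in> T2" unfolding lft_def by blast
        then have "(2,j') \<in> T" unfolding T2_def by auto
        then show False using j'(1) pT by fastforce
      qed
      ultimately show ?thesis by simp
    qed
    show "abv T2 i j \<noteq> lft T2 i j" if ij: "(i,j) \<in> T" "(i,j) \<noteq> (2,c)" "(i,j) \<noteq> (1,1)" for i j
      using abvR[OF ij(1,2)] lftR[OF ij(1,2)] cnm2_c2[OF H ij(1,3)] by simp
    show "\<exists>j. (2,j) \<in> T2" unfolding T2_def by blast
    show "\<exists>i. (i,c) \<in> T2" using t1c unfolding T2_def by (intro exI[of _ 1]) auto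
    show "below T2 2 1" using a0 unfolding T2_def by (intro belowI[of _ a0]) auto
    show "rgt T2 2 1" using b3 c3 unfolding T2_def by (intro rgtI[of _ b3]) auto
    show "below T2 i j = below T i j \<and> rgt T2 i j = rgt T i j" if "(i,j) \<in> T" "(i,j) \<noteq> (2,c)" for i j
      using belR[OF that] rgtR[OF that] by simp
  qed
  then show ?thesis by blast
qed

lemma move2c:
  assumes H: "cnm2 N T" and n21: "(2,1) \<notin> T" and c3: "3 \<le> c" and t2c: "(2,c) \<in> T"
    and t1c: "(1,c) \<in> T" and cmin: "\<And>j. (2,j) \<in> T \<Longrightarrow> c \<le> j" and lf: "(2,c) \<in> lv T"
    and a0: "2 < a0" "(a0,1) \<in> T"
  shows "\<exists>T2. cnm2 N T2 \<and> lv T2 = lv T \<and> T2 \<noteq> T"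
proof -
  define T2 where "T2 = insert (2,1) (T - {(1,c)})"
  have pT: "\<And>i j. (i,j) \<in> T \<Longrightarrow> 1 \<le> i \<and> i \<le> N \<and> 1 \<le> j \<and> j \<le> N" using cnm2_sub[OF H] by blast
  have t11: "(1,1) \<in> T" using cnm2_root[OF H] .
  have N2: "2 \<le> N" using pT[OF t2c] by simp
  have nb: "\<not> below T 2 c" using lf unfolding lv_iff by simp
  have nr: "\<not> rgt T 2 c" using cnm2_br[OF H t2c] nb by simp
  have noB: "i \<le> 2" if "(i,c) \<in> T" for i
    using nb that belowI[of 2 i c T] by (cases "i \<le> 2") auto
  have row2: "j = c" if "(2,j) \<in> T" for j
  proof -
    have "j \<le> c" using nr that rgtI[of c j 2 T] by (cases "j \<le> c") auto
    then show ?thesis using cmin[OF that] by simp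
  qed
  have b1c: "below T 1 c" using t2c by (intro belowI[of _ 2]) auto
  then have "rgt T 1 c" using cnm2_br[OF H t1c] by simp
  then obtain b4 where b4: "c < b4" "(1,b4) \<in> T" unfolding rgt_def by blast
  have abvR: "abv T2 i j = abv T i j" if "(i,j) \<in> T" "(i,j) \<noteq> (1,c)" "(i,j) \<noteq> (2,c)" for i j
  proof (rule abv_repl[OF T2_def])
    show "\<exists>i''<i. (i'',j) \<in> T2" if "i' < i" "(i',j) = (1,c)" for i'
    proof -
      have "j = c" "1 < i" using that by auto
      then have "i \<le> 2" using noB \<open>(i,j) \<in> T\<close> by simp
      then have "i = 2" using \<open>1 < i\<close> by simp
      then show ?thesis using \<open>j = c\<close> \<open>(i,j) \<noteq> (2,c)\<close> by simp
    qed
    show "abv T i j" if "i' < i" "(i',j) = (2,1)" for i'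
      using that t11 by (intro abvI[of 1]) auto
  qed
  have lftR: "lft T2 i j = lft T i j" if "(i,j) \<in> T" "(i,j) \<noteq> (1,c)" "(i,j) \<noteq> (2,c)" for i j
  proof (rule lft_repl[OF T2_def])
    show "\<exists>j''<j. (i,j'') \<in> T2" if "j' < j" "(i,j') = (1,c)" for j'
      using that t11 c3 unfolding T2_def by (intro exI[of _ 1]) auto
    show "lft T i j" if "j' < j" "(i,j') = (2,1)" for j'
    proof -
      have "i = 2" using that by auto
      then have "j = c" using row2 \<open>(i,j) \<in> T\<close> by simp
      then show ?thesis using \<open>i = 2\<close> \<open>(i,j) \<noteq> (2,c)\<close> by simp
    qed
  qed
  have belR: "below T2 i j = below T i j" if "(i,j) \<in> T" "(i,j) \<noteq> (1,c)" for i j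
  proof (rule below_repl[OF T2_def])
    show "\<exists>i''>i. (i'',j) \<in> T2" if "i < i'" "(i',j) = (1,c)" for i'
      using that pT[OF \<open>(i,j) \<in> T\<close>] by auto
    show "below T i j" if "i < i'" "(i',j) = (2,1)" for i'
      using that a0 by (intro belowI[of _ a0]) auto
  qed
  have rgtR: "rgt T2 i j = rgt T i j" if "(i,j) \<in> T" "(i,j) \<noteq> (1,c)" for i j
  proof (rule rgt_repl[OF T2_def])
    show "\<exists>j''>j. (i,j'') \<in> T2" if "j < j'" "(i,j') = (1,c)" for j'
      using that b4 unfolding T2_def by (intro exI[of _ b4]) auto
    show "rgt T i j" if "j < j'" "(i,j') = (2,1)" for j'
      using that pT[OF \<open>(i,j) \<in> T\<close>] by auto
  qed
  have "cnm2 N T2 \<and> lv T2 = lv T \<and> T2 \<noteq> T"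
  proof (rule repl_cnm[OF H T2_def t1c n21])
    show "1 \<le> (2::nat)" "(2::nat) \<le> N" "1 \<le> (1::nat)" "(1::nat) \<le> N" using N2 by auto
    show "((1::nat),c) \<noteq> (1,1)" using c3 by simp
    show "(1,c) \<notin> lv T" using b1c unfolding lv_iff by simp
    show "abv T2 2 1 \<noteq> lft T2 2 1"
    proof -
      have "abv T2 2 1" using t11 c3 unfolding T2_def by (intro abvI[of 1]) auto
      moreover have "\<not> lft T2 2 1"
      proof
        assume "lft T2 2 1"
        then obtain j' where j': "j' < 1" "(2,j') \<in> T2" unfolding lft_def by blast
        then have "(2,j') \<in> T" unfolding T2_def by auto
        then show False using j'(1) pT by fastforce
      qed
      ultimately show ?thesis by simp
    qed
    show "abv T2 i j \<noteq> lft T2 i j" if ij: "(i,j) \<in> T" "(i,j) \<noteq> (1,c)" "(i,j) \<noteq> (1,1)" for i j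
    proof (cases "(i,j) = (2,c)")
      case True
      have "\<not> abv T2 2 c"
      proof
        assume "abv T2 2 c"
        then obtain i' where i': "i' < 2" "(i',c) \<in> T2" unfolding abv_def by blast
        then have "(i',c) \<in> T" "i' \<noteq> 1" using c3 unfolding T2_def by auto
        then show False using i'(1) pT by fastforce
      qed
      moreover have "lft T2 2 c" using c3 unfolding T2_def by (intro lftI[of 1]) auto
      ultimately show ?thesis using True by simp
    next
      case False
      then show ?thesis using abvR[OF ij(1,2) False] lftR[OF ij(1,2) False] cnm2_c2[OF H ij(1,3)] by simp
    qed
    show "\<exists>j. (1,j) \<in> T2" using t11 c3 unfolding T2_def by (intro exI[of _ 1]) auto
    show "\<exists>i. (i,c) \<in> T2" using t2c unfolding T2_def by (intro exI[of _ 2]) auto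
    show "below T2 2 1" using a0 unfolding T2_def by (intro belowI[of _ a0]) auto
    show "rgt T2 2 1" using t2c c3 unfolding T2_def by (intro rgtI[of _ c]) auto
    show "below T2 i j = below T i j \<and> rgt T2 i j = rgt T i j" if "(i,j) \<in> T" "(i,j) \<noteq> (1,c)" for i j
      using belR[OF that] rgtR[OF that] by simp
  qed
  then show ?thesis by blast
qed

lemma move2:
  assumes H: "cnm2 N T" and N2: "2 \<le> N" and n21: "(2,1) \<notin> T"
  shows "\<exists>T2. cnm2 N T2 \<and> lv T2 = lv T \<and> T2 \<noteq> T"
proof -
  have pT: "\<And>i j. (i,j) \<in> T \<Longrightarrow> 1 \<le> i \<and> i \<le> N \<and> 1 \<le> j \<and> j \<le> N" using cnm2_sub[OF H] by blast
  have t11: "(1,1) \<in> T" using cnm2_root[OF H] .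
  obtain j0 where j0: "(2,j0) \<in> T" using cnm2_row[OF H, of 2] N2 by auto
  define c where "c = (LEAST j. (2,j) \<in> T)"
  have t2c: "(2,c) \<in> T" unfolding c_def using LeastI[of "\<lambda>j. (2,j) \<in> T", OF j0] .
  have cmin: "\<And>j. (2,j) \<in> T \<Longrightarrow> c \<le> j" unfolding c_def by (rule Least_le)
  have c2: "2 \<le> c" using pT[OF t2c] n21 t2c by (cases "c = 1") auto
  have nl: "\<not> lft T 2 c" unfolding lft_def using cmin by (auto simp: not_less[symmetric])
  have ne: "((2::nat),c) \<noteq> (1,1)" by simp
  have "abv T 2 c" using cnm2_c2[OF H t2c ne] nl by simp
  then obtain i' where i': "i' < 2" "(i',c) \<in> T" unfolding abv_def by blast
  have "i' = 1" using i' pT by fastforce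
  then have t1c: "(1,c) \<in> T" using i' by simp
  have "below T 1 1" using root_below[OF H N2] .
  then obtain a0' where a0': "1 < a0'" "(a0',1) \<in> T" unfolding below_def by blast
  have a0: "2 < a0'" using a0' n21 by (cases "a0' = 2") auto
  show ?thesis
  proof (cases "c = 2")
    case True
    show ?thesis using move2a[OF H n21 _ _ a0 a0'(2)] t1c t2c True by simp
  next
    case False
    then have c3: "3 \<le> c" using c2 by simp
    show ?thesis
    proof (cases "(2,c) \<in> lv T")
      case True
      show ?thesis by (rule move2c[OF H n21 c3 t2c t1c cmin True a0 a0'(2)])
    next
      case False
      show ?thesis by (rule move2b[OF H n21 c3 t2c t1c cmin False a0 a0'(2)])
    qed
  qed
qed

lemma move:
  assumes H: "cnm2 N T" and N2: "2 \<le> N" and l21: "(2,1) \<notin> lv T" and l12: "(1,2) \<notin> lv T"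
  shows "\<exists>T2. cnm2 N T2 \<and> lv T2 = lv T \<and> T2 \<noteq> T"
proof (cases "(2,1) \<in> T")
  case False then show ?thesis using move2[OF H N2] by blast
next
  case t21: True
  show ?thesis
  proof (cases "(1,2) \<in> T")
    case True then show ?thesis using move1[OF H True t21 l21 l12] by blast
  next
    case False
    have Ht: "cnm2 N (tr T)" using H cnm2_tr by blast
    have "(2,1) \<notin> tr T" using False by simp
    then obtain T2 where T2: "cnm2 N T2" "lv T2 = lv (tr T)" "T2 \<noteq> tr T" using move2[OF Ht N2] by blast
    have "cnm2 N (tr T2)" using T2(1) cnm2_tr by blast
    moreover have "lv (tr T2) = lv T" using lv_tr[OF T2(1)] T2(2) lv_tr[OF H] by simp
    moreover have "tr T2 \<noteq> T" using T2(3) by auto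
    ultimately show ?thesis by blast
  qed
qed

definition U :: "nat \<Rightarrow> (nat \<times> nat) set set" where
  "U n = {P. is_perm_matrix n P \<and> (\<exists>!T. cnm2 n T \<and> lv T = P)}"

definition eB :: "(nat \<times> nat) set \<Rightarrow> (nat \<times> nat) set" where
  "eB Q = tr (eA (tr Q))"

lemma goal_set: "{P. is_perm_matrix n P \<and> (\<exists>!T. is_cnm n T \<and> leaf_matrix T = P)} = U n"
proof -
  have "(is_cnm n T \<and> leaf_matrix T = P) \<longleftrightarrow> (cnm2 n T \<and> lv T = P)" for P T
    using cnm_iff[of n T] leaf_eq[of n T] by auto
  then show ?thesis unfolding U_def by simp
qed

lemma perm_pos: "is_perm_matrix n P \<Longrightarrow> pos P"
  unfolding is_perm_matrix_def pos_def by auto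

lemma U_pos: "Q \<in> U m \<Longrightarrow> pos Q"
  unfolding U_def using perm_pos by blast

lemma UD: assumes "P \<in> U n" obtains T where "cnm2 n T" "lv T = P" "\<And>T'. cnm2 n T' \<Longrightarrow> lv T' = P \<Longrightarrow> T' = T"
  using assms unfolding U_def by auto

lemma U_tr: assumes P: "P \<in> U n" shows "tr P \<in> U n"
proof -
  obtain T where T: "cnm2 n T" "lv T = P" "\<And>T'. cnm2 n T' \<Longrightarrow> lv T' = P \<Longrightarrow> T' = T"
    using UD[OF P] by blast
  have perm: "is_perm_matrix n (tr P)" using P unfolding U_def using perm_tr by blast
  have c: "cnm2 n (tr T)" using T(1) cnm2_tr by blast
  have l: "lv (tr T) = tr P" using lv_tr[OF T(1)] T(2) by simp
  have u: "T' = tr T" if "cnm2 n T'" "lv T' = tr P" for T'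
  proof -
    have "cnm2 n (tr T')" using that(1) cnm2_tr by blast
    moreover have "lv (tr T') = P" using lv_tr[OF that(1)] that(2) by simp
    ultimately have "tr T' = T" using T(3) by blast
    then show ?thesis by auto
  qed
  show ?thesis unfolding U_def using perm c l u by blast
qed

lemma caseA:
  assumes P: "P \<in> U (Suc m)" and p21: "(2,1) \<in> P"
  shows "P \<in> eA ` U m"
proof -
  obtain T where T: "cnm2 (Suc m) T" "lv T = P" "\<And>T'. cnm2 (Suc m) T' \<Longrightarrow> lv T' = P \<Longrightarrow> T' = T"
    using UD[OF P] by blast
  obtain S where S: "cnm2 m S" "T = expA S" using conA[OF T(1)] p21 T(2) by blast
  have PE: "P = eA (lv S)" using lv_expA[OF S(1)] S(2) T(2) by simp
  have "lv S \<in> U m"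
  proof -
    have perm: "is_perm_matrix m (lv S)" using perm_lv[OF S(1)] .
    have u: "S' = S" if "cnm2 m S'" "lv S' = lv S" for S'
    proof -
      have "cnm2 (Suc m) (expA S')" using expA_cnm[OF that(1)] .
      moreover have "lv (expA S') = P" using lv_expA[OF that(1)] that(2) PE by simp
      ultimately have "expA S' = T" using T(3) by blast
      then have "expA S' = expA S" using S(2) by simp
      then show ?thesis using expA_inj cnm2_pos that(1) S(1) by blast
    qed
    show ?thesis unfolding U_def using perm S(1) u by blast
  qed
  then show ?thesis using PE by blast
qed

lemma U_sub:
  assumes m: "1 \<le> m" and P: "P \<in> U (Suc m)"
  shows "P \<in> eA ` U m \<union> eB ` U m"
proof -
  obtain T where T: "cnm2 (Suc m) T" "lv T = P" "\<And>T'. cnm2 (Suc m) T' \<Longrightarrow> lv T' = P \<Longrightarrow> T' = T"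
    using UD[OF P] by blast
  have "(2,1) \<in> P \<or> (1,2) \<in> P"
  proof (rule ccontr)
    assume "\<not> ((2,1) \<in> P \<or> (1,2) \<in> P)"
    then have "(2,1) \<notin> lv T" "(1,2) \<notin> lv T" using T(2) by auto
    then obtain T2 where "cnm2 (Suc m) T2" "lv T2 = lv T" "T2 \<noteq> T" using move[OF T(1)] m by fastforce
    then show False using T(2,3) by blast
  qed
  then show ?thesis
  proof
    assume "(2,1) \<in> P" then show ?thesis using caseA[OF P] by blast
  next
    assume "(1,2) \<in> P"
    then have "(2,1) \<in> tr P" by simp
    then obtain Q where Q: "Q \<in> U m" "tr P = eA Q" using caseA[OF U_tr[OF P]] by blast
    have "P = eB (tr Q)" unfolding eB_def using Q(2) by (metis tr_tr)
    moreover have "tr Q \<in> U m" using U_tr[OF Q(1)] .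
    ultimately show ?thesis by blast
  qed
qed

lemma eA_U:
  assumes Q: "Q \<in> U m" shows "eA Q \<in> U (Suc m)"
proof -
  obtain S where S: "cnm2 m S" "lv S = Q" "\<And>S'. cnm2 m S' \<Longrightarrow> lv S' = Q \<Longrightarrow> S' = S"
    using UD[OF Q] by blast
  have c: "cnm2 (Suc m) (expA S)" using expA_cnm[OF S(1)] .
  have l: "lv (expA S) = eA Q" using lv_expA[OF S(1)] S(2) by simp
  have perm: "is_perm_matrix (Suc m) (eA Q)" using perm_lv[OF c] l by simp
  have u: "T' = expA S" if h: "cnm2 (Suc m) T'" "lv T' = eA Q" for T'
  proof -
    have "(2,1) \<in> lv T'" using h(2) unfolding eA_def by simp
    then obtain S' where S': "cnm2 m S'" "T' = expA S'" using conA[OF h(1)] by blast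
    have "eA (lv S') = eA Q" using lv_expA[OF S'(1)] S'(2) h(2) by simp
    moreover have "pos (lv S')" using perm_pos[OF perm_lv[OF S'(1)]] .
    moreover have "pos Q" using U_pos[OF Q] .
    ultimately have "lv S' = Q" using eA_inj by blast
    then have "S' = S" using S(3) S'(1) by blast
    then show ?thesis using S'(2) by simp
  qed
  show ?thesis unfolding U_def using perm c l u by blast
qed

lemma eB_U: assumes Q: "Q \<in> U m" shows "eB Q \<in> U (Suc m)"
  unfolding eB_def using U_tr[OF eA_U[OF U_tr[OF Q]]] .

lemma U_step_eq: assumes "1 \<le> m" shows "U (Suc m) = eA ` U m \<union> eB ` U m"
  using U_sub[OF assms] eA_U eB_U by blast

lemma psi12: assumes "pos Q" "(1,2) \<in> psi ` Q" shows "(1,1) \<in> Q"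
proof -
  obtain i j where ij: "(i,j) \<in> Q" "1 = hh i" "2 = Suc j" using assms(2) unfolding psi_mem by blast
  have "1 \<le> i" using posD[OF assms(1) ij(1)] by simp
  moreover have "hh i = 1" using ij(2) by simp
  ultimately have "i = 1" using hh_1 by blast
  then show ?thesis using ij by simp
qed

lemma disj: assumes m: "2 \<le> m" shows "eA ` U m \<inter> eB ` U m = {}"
proof -
  have False if Q: "Q \<in> U m" and Q': "Q' \<in> U m" and e: "eA Q = eB Q'" for Q Q'
  proof -
    have "(2,1) \<in> eA (tr Q')" unfolding eA_def by simp
    then have "(1,2) \<in> eB Q'" unfolding eB_def by simp
    then have "(1,2) \<in> eA Q" using e by simp
    then have "(1,2) \<in> psi ` Q" unfolding eA_def by simp
    moreover have "pos Q" using U_pos[OF Q] .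
    ultimately have q11: "(1,1) \<in> Q" by (rule psi12[rotated])
    obtain S where S: "cnm2 m S" "lv S = Q" using UD[OF Q] by blast
    show False using root_not_leaf[OF S(1) m] S(2) q11 by simp
  qed
  then show ?thesis by blast
qed

lemma inj_eA: "inj_on eA (U m)"
proof (rule inj_onI)
  fix Q Q' assume "Q \<in> U m" "Q' \<in> U m" "eA Q = eA Q'"
  then show "Q = Q'" using eA_inj U_pos by blast
qed

lemma inj_eB: "inj_on eB (U m)"
proof (rule inj_onI)
  fix Q Q' assume h: "Q \<in> U m" "Q' \<in> U m" "eB Q = eB Q'"
  then have "eA (tr Q) = eA (tr Q')" unfolding eB_def using tr_inj by blast
  moreover have "tr Q \<in> U m" "tr Q' \<in> U m" using U_tr h(1,2) by auto
  then have "pos (tr Q)" "pos (tr Q')" using U_pos by auto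
  ultimately have "tr Q = tr Q'" using eA_inj by blast
  then show "Q = Q'" using tr_inj by blast
qed

lemma finU: "finite (U m)"
proof -
  have "U m \<subseteq> Pow ({1..m} \<times> {1..m})" unfolding U_def is_perm_matrix_def by auto
  then show ?thesis by (rule finite_subset) simp
qed

lemma card_step: assumes m: "2 \<le> m" shows "card (U (Suc m)) = 2 * card (U m)"
proof -
  have "card (U (Suc m)) = card (eA ` U m \<union> eB ` U m)" using U_step_eq m by simp
  also have "\<dots> = card (eA ` U m) + card (eB ` U m)"
    using disj[OF m] finU by (intro card_Un_disjoint) auto
  also have "\<dots> = card (U m) + card (U m)"
    using card_image[OF inj_eA] card_image[OF inj_eB] by simp
  finally show ?thesis by simp
qed

lemma cnm2_1: "cnm2 1 T \<longleftrightarrow> T = {(1,1)}"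
proof
  assume "cnm2 1 T"
  then show "T = {(1,1)}" unfolding cnm2_def by auto
next
  assume T: "T = {(1,1)}"
  show "cnm2 1 T" unfolding T by (rule cnm2I) (auto simp: below_def rgt_def)
qed

lemma U1: "U 1 = {{(1,1)}}"
proof -
  have lv1: "lv {(1,1)} = {(1,1)}" unfolding lv_def below_def by auto
  have "P \<in> U 1 \<longleftrightarrow> P = {(1,1)}" for P
  proof
    assume "P \<in> U 1"
    then obtain T where "cnm2 1 T" "lv T = P" using UD by blast
    then show "P = {(1,1)}" using cnm2_1 lv1 by simp
  next
    assume P: "P = {(1,1)}"
    have "is_perm_matrix 1 P" unfolding P is_perm_matrix_def by auto
    moreover have "\<exists>!T. cnm2 1 T \<and> lv T = P" using cnm2_1 lv1 P by auto
    ultimately show "P \<in> U 1" unfolding U_def by blast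
  qed
  then show ?thesis by auto
qed

lemma U2: "card (U 2) = 1"
proof -
  have e1: "eA {(1,1)} = {(2,1),(1,2)}" unfolding eA_def psi_def hh_def by auto
  have e2: "eB {(1,1)} = {(2,1),(1,2)}" unfolding eB_def
  proof -
    have "tr {(1,1)} = {(1,1)}" unfolding tr_def by auto
    moreover have "tr {(2,1),(1,2)} = {(2,1),(1,2)}" unfolding tr_def by auto
    ultimately show "tr (eA (tr {(1, 1)})) = {(2, 1), (1, 2)}" using e1 by simp
  qed
  have "U 2 = {{(2,1),(1,2)}}" using U_step_eq[of 1] U1 e1 e2 by (simp add: numeral_2_eq_2)
  then show ?thesis by simp
qed

lemma card_U: "2 \<le> n \<Longrightarrow> card (U n) = 2 ^ (n - 2)"
proof (induction n rule: dec_induct)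
  case base then show ?case using U2 by simp
next
  case (step n)
  have "Suc n - 2 = Suc (n - 2)" using step(1) by simp
  then show ?case using card_step[OF step(1)] step(3) by simp
qed

theorem corollary3p5:
  fixes n :: nat
  assumes "n \<ge> 2"
  shows "card {P. is_perm_matrix n P \<and> (\<exists>!T. is_cnm n T \<and> leaf_matrix T = P)} = 2 ^ (n - 2)"
  using card_U[OF assms] goal_set by simp

end
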